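(* Let $A$ be a calibrated $R$-superalgebra and $V$ a calibrated $A$-supermodule. Then $\tilde\Gamma^dV\subseteq\Gamma^dV$ is a $\tilde\Gamma^dA$-submodule, i.e. $\eta\, y\in\tilde\Gamma^dV$ for all $\eta\in\tilde\Gamma^dA$ and $y\in\tilde\Gamma^dV$.
   Context: Let $R$ be a principal ideal domain of characteristic $0$. A calibrated $R$-supermodule is a free $R$-supermodule $V=V_{\bar0}\oplus V_{\bar1}$ of finite rank with a decomposition $V_{\bar0}=V_{\mathfrak a}\oplus V_{\mathfrak c}$ into free $R$-submodules; choose bases $B_{\mathfrak a},B_{\mathfrak c},B_{\bar1}$, let $B$ be their union, fix a total order on $B$. $\mathfrak S_d$ acts on $V^{\otimes d}$ by $(v_1\otimes\cdots\otimes v_d)^\sigma=(-1)^{\langle\sigma;\mathbf v\rangle}v_{\sigma1}\otimes\cdots\otimes v_{\sigma d}$, $\langle\sigma;\mathbf v\rangle$ = number of $k<l$ with $\sigma^{-1}k>\sigma^{-1}l$ and $v_k,v_l$ odd; $\Gamma^dV$ = invariants. For $\mathbf b\in B^d$: $\langle\mathbf b\rangle$ = number of $k<l$ with $b_k,b_l\in B_{\bar1}$, $b_k>b_l$; $[\mathbf b]^!_{\mathfrak c}=\prod_{b\in B_{\mathfrak c}}\#\{k:b_k=b\}!$; $\mathrm{Seq}(B,d)$ = tuples in which only elements of $B_{\mathfrak a}\sqcup B_{\mathfrak c}$ may repeat; $x_{\mathbf b}=\sum(-1)^{\langle\mathbf b\rangle+\langle\mathbf b'\rangle}b'_1\otimes\cdots\otimes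 b'_d$ over distinct place-permutations $\mathbf b'$ of $\mathbf b$; $y_{\mathbf b}=[\mathbf b]^!_{\mathfrak c}x_{\mathbf b}$; $\tilde\Gamma^dV=\mathrm{span}_R\{y_{\mathbf b}:\mathbf b\in\mathrm{Seq}(B,d)\}$. A calibrated $R$-superalgebra is an $R$-superalgebra $A$, free of finite rank, with a decomposition $A_{\bar0}=\mathfrak a\oplus\mathfrak c$ into free $R$-submodules such that $\mathfrak a$ is a unital subalgebra; regarding $A$ as a calibrated supermodule gives $\tilde\Gamma^dA\subseteq\Gamma^dA\subseteq A^{\otimes d}$, where $A^{\otimes d}$ is a superalgebra with $(a_1\otimes\cdots\otimes a_d)(b_1\otimes\cdots\otimes b_d)=(-1)^{\langle\mathbf a,\mathbf b\rangle}a_1b_1\otimes\cdots\otimes a_db_d$ ($\langle\mathbf a,\mathbf b\rangle$ = number of $k>l$ with $a_k,b_l$ odd); $\tilde\Gamma^dA$ is a unital subsuperalgebra of $\Gamma^dA$. If $V$ is an $A$-supermodule then $V^{\otimes d}$ is an $A^{\otimes d}$-supermodule via $(a_1\otimes\cdots\otimes a_d)(v_1\otimes\cdots\otimes v_d)=(-1)^{\langle\mathbf a,\mathbf v\rangle}a_1v_1\otimes\cdots\otimes a_dv_d$, and $\Gamma^dV$ is a $\Gamma^dA$-submodule. A calibrated $A$-supermodule is an $A$-supermodule $V$ which is a calibrated $R$-supermodule with $\mathfrak aV_{\mathfrak a}\subseteq V_{\mathfrak a}$. *)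

theory Defs
  imports Main "HOL-Library.Multiset"
begin

definition is_ideal :: "'r::comm_ring_1 set \<Rightarrow> bool" where
  "is_ideal I \<longleftrightarrow> 0 \<in> I \<and> (\<forall>x\<in>I. \<forall>y\<in>I. x + y \<in> I) \<and> (\<forall>r x. x \<in> I \<longrightarrow> r * x \<in> I)"

definition pid_ring :: "'r::idom itself \<Rightarrow> bool" where
  "pid_ring _ \<longleftrightarrow> (\<forall>I::'r set. is_ideal I \<longrightarrow> (\<exists>a. I = {a * x | x. True}))"

definition tuples :: "'b set \<Rightarrow> nat \<Rightarrow> 'b list set" where
  "tuples S d = {xs. set xs \<subseteq> S \<and> length xs = d}"

definition odd_inv :: "'b::linorder set \<Rightarrow> 'b list \<Rightarrow> nat" where
  "odd_inv Od bs = card {(k,l). k < l \<and> l < length bs \<and> bs!k \<in> Od \<and> bs!l \<in> Od \<and> bs!k > bs!l}"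

definition fact_c :: "'b set \<Rightarrow> 'b list \<Rightarrow> nat" where
  "fact_c Bc bs = (\<Prod>b\<in>Bc. fact (count (mset bs) b))"

definition Seq :: "'b set \<Rightarrow> 'b set \<Rightarrow> 'b set \<Rightarrow> nat \<Rightarrow> 'b list set" where
  "Seq Ba Bc B1 d = {bs \<in> tuples (Ba \<union> Bc \<union> B1) d.
      \<forall>k l. k < l \<and> l < d \<and> bs!k = bs!l \<longrightarrow> bs!k \<in> Ba \<union> Bc}"

text \<open>x_b as coordinate function on B^d: sum over distinct place permutations b' of b.\<close>
definition x_vec :: "'b::linorder set \<Rightarrow> 'b list \<Rightarrow> 'b list \<Rightarrow> 'r::comm_ring_1" where
  "x_vec B1 bs = (\<lambda>bs'. if mset bs' = mset bs then (-1) ^ (odd_inv B1 bs + odd_inv B1 bs') else 0)"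

definition y_vec :: "'b set \<Rightarrow> 'b::linorder set \<Rightarrow> 'b list \<Rightarrow> 'b list \<Rightarrow> 'r::comm_ring_1" where
  "y_vec Bc B1 bs = (\<lambda>bs'. of_nat (fact_c Bc bs) * x_vec B1 bs bs')"

definition Gamma_tilde :: "'b::linorder set \<Rightarrow> 'b set \<Rightarrow> 'b set \<Rightarrow> nat \<Rightarrow> ('b list \<Rightarrow> 'r::comm_ring_1) set" where
  "Gamma_tilde Ba Bc B1 d =
     {f. \<exists>c. f = (\<lambda>w. \<Sum>bs\<in>Seq Ba Bc B1 d. c bs * y_vec Bc B1 bs w)}"

text \<open>A is free with basis C = Ca \<union> Cc \<union> C1 (bases of \<a>, \<c>, A_1);
  mul x y z = coefficient of z in x*y; one z = coefficient of z in 1.\<close>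
definition calibrated_superalgebra ::
  "'c set \<Rightarrow> 'c set \<Rightarrow> 'c set \<Rightarrow> ('c \<Rightarrow> 'c \<Rightarrow> 'c \<Rightarrow> 'r::comm_ring_1) \<Rightarrow> ('c \<Rightarrow> 'r) \<Rightarrow> bool" where
  "calibrated_superalgebra Ca Cc C1 mul one \<longleftrightarrow>
     (let C = Ca \<union> Cc \<union> C1 in
     finite C \<and> Ca \<inter> Cc = {} \<and> Ca \<inter> C1 = {} \<and> Cc \<inter> C1 = {} \<and>
     (\<forall>x\<in>C. \<forall>y\<in>C. \<forall>z. mul x y z \<noteq> 0 \<longrightarrow> z \<in> C) \<and>
     (\<forall>z. one z \<noteq> 0 \<longrightarrow> z \<in> C) \<and>
     (\<forall>x\<in>C. \<forall>y\<in>C. \<forall>z\<in>C. \<forall>w.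
        (\<Sum>u\<in>C. mul x y u * mul u z w) = (\<Sum>u\<in>C. mul y z u * mul x u w)) \<and>
     (\<forall>x\<in>C. \<forall>w. (\<Sum>u\<in>C. one u * mul u x w) = (if w = x then 1 else 0)) \<and>
     (\<forall>x\<in>C. \<forall>w. (\<Sum>u\<in>C. one u * mul x u w) = (if w = x then 1 else 0)) \<and>
     (\<forall>x\<in>C. \<forall>y\<in>C. \<forall>z. mul x y z \<noteq> 0 \<longrightarrow> ((z \<in> C1) \<longleftrightarrow> ((x \<in> C1) \<noteq> (y \<in> C1)))) \<and>
     (\<forall>z. one z \<noteq> 0 \<longrightarrow> z \<in> Ca) \<and>
     (\<forall>x\<in>Ca. \<forall>y\<in>Ca. \<forall>z. mul x y z \<noteq> 0 \<longrightarrow> z \<in> Ca))"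

text \<open>V is free with basis B = Ba \<union> Bc \<union> B1; act x v w = coefficient of w in x v.\<close>
definition calibrated_supermodule ::
  "'c set \<Rightarrow> 'c set \<Rightarrow> 'c set \<Rightarrow> ('c \<Rightarrow> 'c \<Rightarrow> 'c \<Rightarrow> 'r::comm_ring_1) \<Rightarrow> ('c \<Rightarrow> 'r) \<Rightarrow>
   'b set \<Rightarrow> 'b set \<Rightarrow> 'b set \<Rightarrow> ('c \<Rightarrow> 'b \<Rightarrow> 'b \<Rightarrow> 'r) \<Rightarrow> bool" where
  "calibrated_supermodule Ca Cc C1 mul one Ba Bc B1 act \<longleftrightarrow>
     (let C = Ca \<union> Cc \<union> C1; B = Ba \<union> Bc \<union> B1 in
     finite B \<and> Ba \<inter> Bc = {} \<and> Ba \<inter> B1 = {} \<and> Bc \<inter> B1 = {} \<and>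
     (\<forall>x\<in>C. \<forall>v\<in>B. \<forall>w. act x v w \<noteq> 0 \<longrightarrow> w \<in> B) \<and>
     (\<forall>x\<in>C. \<forall>y\<in>C. \<forall>v\<in>B. \<forall>w.
        (\<Sum>u\<in>C. mul x y u * act u v w) = (\<Sum>t\<in>B. act y v t * act x t w)) \<and>
     (\<forall>v\<in>B. \<forall>w. (\<Sum>u\<in>C. one u * act u v w) = (if w = v then 1 else 0)) \<and>
     (\<forall>x\<in>C. \<forall>v\<in>B. \<forall>w. act x v w \<noteq> 0 \<longrightarrow> ((w \<in> B1) \<longleftrightarrow> ((x \<in> C1) \<noteq> (v \<in> B1)))) \<and>
     (\<forall>x\<in>Ca. \<forall>v\<in>Ba. \<forall>w. act x v w \<noteq> 0 \<longrightarrow> w \<in> Ba))"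

definition cross_odd :: "'c set \<Rightarrow> 'b set \<Rightarrow> 'c list \<Rightarrow> 'b list \<Rightarrow> nat" where
  "cross_odd C1 B1 as vs = card {(k,l). l < k \<and> k < length as \<and> as!k \<in> C1 \<and> vs!l \<in> B1}"

text \<open>Action of A^{\<otimes>d} on V^{\<otimes>d}, in coordinates.\<close>
definition tensor_act ::
  "'c set \<Rightarrow> 'c set \<Rightarrow> 'c set \<Rightarrow> 'b set \<Rightarrow> 'b set \<Rightarrow> 'b set \<Rightarrow> ('c \<Rightarrow> 'b \<Rightarrow> 'b \<Rightarrow> 'r::comm_ring_1) \<Rightarrow>
   nat \<Rightarrow> ('c list \<Rightarrow> 'r) \<Rightarrow> ('b list \<Rightarrow> 'r) \<Rightarrow> 'b list \<Rightarrow> 'r" where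
  "tensor_act Ca Cc C1 Ba Bc B1 act d eta y =
     (\<lambda>w. if w \<in> tuples (Ba \<union> Bc \<union> B1) d then
        (\<Sum>as\<in>tuples (Ca \<union> Cc \<union> C1) d. \<Sum>vs\<in>tuples (Ba \<union> Bc \<union> B1) d.
           eta as * y vs * (-1) ^ cross_odd C1 B1 as vs * (\<Prod>k<d. act (as!k) (vs!k) (w!k)))
      else 0)"

end

theory Submission
  imports Defs "HOL-Library.Product_Lexorder"
begin

definition tr :: "nat \<Rightarrow> nat \<Rightarrow> nat" where
  "tr i k = (if k = i then Suc i else if k = Suc i then i else k)"

definition swp :: "nat \<Rightarrow> 'a list \<Rightarrow> 'a list" where
  "swp i xs = xs[i := xs ! Suc i, Suc i := xs ! i]"

lemma length_swp[simp]: "length (swp i xs) = length xs"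
  by (simp add: swp_def)

lemma nth_swp: "Suc i < length xs \<Longrightarrow> k < length xs \<Longrightarrow> swp i xs ! k = xs ! tr i k"
  by (auto simp: swp_def tr_def nth_list_update)

lemma nth_swp_i[simp]: "Suc i < length xs \<Longrightarrow> swp i xs ! i = xs ! Suc i"
  by (simp add: nth_swp tr_def)

lemma nth_swp_Si[simp]: "Suc i < length xs \<Longrightarrow> swp i xs ! Suc i = xs ! i"
  by (simp add: nth_swp tr_def)

lemma tr_lt: "Suc i < n \<Longrightarrow> k < n \<Longrightarrow> tr i k < n"
  by (auto simp: tr_def)

lemma tr_tr[simp]: "tr i (tr i k) = k"
  by (auto simp: tr_def)

lemma mset_swp[simp]: "Suc i < length xs \<Longrightarrow> mset (swp i xs) = mset xs"
  unfolding swp_def by (rule mset_swap) auto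

lemma set_swp[simp]: "Suc i < length xs \<Longrightarrow> set (swp i xs) = set xs"
  by (metis mset_swp set_mset_mset)

lemma swp_swp[simp]: "Suc i < length xs \<Longrightarrow> swp i (swp i xs) = xs"
  by (rule nth_equalityI) (auto simp: nth_swp tr_lt)

lemma map_swp: "Suc i < length xs \<Longrightarrow> map f (swp i xs) = swp i (map f xs)"
  by (rule nth_equalityI) (auto simp: nth_swp tr_lt)

lemma zip_swp: "Suc i < length xs \<Longrightarrow> length ys = length xs \<Longrightarrow>
   zip (swp i xs) (swp i ys) = swp i (zip xs ys)"
  by (rule nth_equalityI) (auto simp: nth_swp tr_lt)

definition pc :: "('a \<Rightarrow> 'a \<Rightarrow> bool) \<Rightarrow> 'a list \<Rightarrow> nat" where
  "pc P xs = card {(k,l). k < l \<and> l < length xs \<and> P (xs!k) (xs!l)}"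

lemma tr_mono: "k < l \<Longrightarrow> (k, l) \<noteq> (i, Suc i) \<Longrightarrow> tr i k < tr i l"
  by (auto simp: tr_def)

lemma pc_swp:
  assumes i: "Suc i < length xs"
  shows "pc P (swp i xs) + of_bool (P (xs!i) (xs!Suc i)) = pc P xs + of_bool (P (xs!Suc i) (xs!i))"
proof -
  define S where "S = {(k,l). k < l \<and> l < length xs \<and> P (xs!k) (xs!l)}"
  define S' where "S' = {(k,l). k < l \<and> l < length xs \<and> P (swp i xs!k) (swp i xs!l)}"
  define p where "p = (i, Suc i)"
  define \<phi> where "\<phi> = (\<lambda>(k,l). (tr i k, tr i l))"
  have fS: "finite S" unfolding S_def
    by (rule finite_subset[of _ "{..<length xs} \<times> {..<length xs}"]) auto
  have fS': "finite S'" unfolding S'_def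
    by (rule finite_subset[of _ "{..<length xs} \<times> {..<length xs}"]) auto
  have inj: "inj_on \<phi> X" for X
    unfolding \<phi>_def inj_on_def by (auto dest: arg_cong[of _ _ "tr i"])
  have img: "\<phi> ` (S' - {p}) = S - {p}"
  proof
    show "\<phi> ` (S' - {p}) \<subseteq> S - {p}"
    proof
      fix q assume "q \<in> \<phi> ` (S' - {p})"
      then obtain k l where kl: "(k,l) \<in> S'" "(k,l) \<noteq> p" "q = (tr i k, tr i l)"
        unfolding \<phi>_def by auto
      then have "tr i k < tr i l" using tr_mono p_def unfolding S'_def by auto
      moreover have "(tr i k, tr i l) \<noteq> p" using kl(1,2) p_def unfolding S'_def by (auto simp: tr_def split: if_splits)
      ultimately show "q \<in> S - {p}" using kl i unfolding S'_def S_def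
        by (auto simp: nth_swp tr_lt)
    qed
  next
    show "S - {p} \<subseteq> \<phi> ` (S' - {p})"
    proof
      fix q assume q: "q \<in> S - {p}"
      then obtain k l where kl: "(k,l) \<in> S" "(k,l) \<noteq> p" "q = (k,l)" by (cases q) auto
      have "(tr i k, tr i l) \<noteq> p" using kl(1,2) p_def unfolding S_def by (auto simp: tr_def split: if_splits)
      moreover have "tr i k < tr i l" using tr_mono kl p_def unfolding S_def by auto
      ultimately have "(tr i k, tr i l) \<in> S' - {p}" using kl i unfolding S'_def S_def
        by (auto simp: nth_swp tr_lt)
      moreover have "q = \<phi> (tr i k, tr i l)" using kl by (simp add: \<phi>_def)
      ultimately show "q \<in> \<phi> ` (S' - {p})" by blast
    qed
  qed
  have c1: "card (S' - {p}) = card (S - {p})"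
    using img inj by (metis card_image)
  have pS: "(p \<in> S) = P (xs!i) (xs!Suc i)" using i by (simp add: S_def p_def)
  have pS': "(p \<in> S') = P (xs!Suc i) (xs!i)" using i by (simp add: S'_def p_def)
  have e1: "card S = card (S - {p}) + of_bool (p \<in> S)"
    using fS by (cases "p \<in> S") (auto simp: card_Diff_singleton_if card_gt_0_iff, metis Suc_pred card_gt_0_iff emptyE)
  have e2: "card S' = card (S' - {p}) + of_bool (p \<in> S')"
    using fS' by (cases "p \<in> S'") (auto simp: card_Diff_singleton_if card_gt_0_iff, metis Suc_pred card_gt_0_iff emptyE)
  show ?thesis unfolding pc_def
    using e1 e2 c1 pS pS' S_def S'_def by simp
qed



lemma sort_swp: "Suc i < length z \<Longrightarrow> sort (swp i z) = sort z"
  by (rule properties_for_sort) auto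

lemma swap_invariant_sort:
  fixes g :: "'a::linorder list \<Rightarrow> 'b"
  assumes H: "\<And>z i. Q (mset z) \<Longrightarrow> Suc i < length z \<Longrightarrow> g (swp i z) = g z"
  shows "Q (mset z) \<Longrightarrow> g z = g (sort z)"
proof (induction "pc (\<lambda>x y. x > y) z" arbitrary: z rule: less_induct)
  case (less z)
  show ?case
  proof (cases "sorted z")
    case True then show ?thesis by (simp add: sorted_sort_id)
  next
    case False
    then obtain i where i: "Suc i < length z" "z!i > z!Suc i"
      by (auto simp: sorted_iff_nth_Suc not_le)
    have "pc (\<lambda>x y. x > y) (swp i z) + 1 = pc (\<lambda>x y. x > y) z"
      using pc_swp[OF i(1), of "\<lambda>x y. x > y"] i(2) by simp
    then have lt: "pc (\<lambda>x y. x > y) (swp i z) < pc (\<lambda>x y. x > y) z" by simp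
    have Q': "Q (mset (swp i z))" using less.prems i(1) by simp
    have "g z = g (swp i z)" using H[OF less.prems i(1)] by simp
    also have "\<dots> = g (sort (swp i z))" using less.hyps[OF lt Q'] .
    also have "\<dots> = g (sort z)" using sort_swp[OF i(1)] by simp
    finally show ?thesis .
  qed
qed



lemma count_mset_card: "count (mset w) x = card {i. i < length w \<and> w!i = x}"
  by (simp add: count_mset count_list_eq_length_filter length_filter_conv_card eq_commute)

lemma count_ge2_I: "i < j \<Longrightarrow> j < length w \<Longrightarrow> w!i = w!j \<Longrightarrow> 2 \<le> count (mset w) (w!i)"
proof -
  assume a: "i < j" "j < length w" "w!i = w!j"
  have "{i,j} \<subseteq> {k. k < length w \<and> w!k = w!i}" using a by auto
  then have "card {i,j} \<le> card {k. k < length w \<and> w!k = w!i}"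
    by (intro card_mono) auto
  then show ?thesis using a by (simp add: count_mset_card)
qed

lemma count_ge2_D: "2 \<le> count (mset w) x \<Longrightarrow> \<exists>i j. i < j \<and> j < length w \<and> w!i = x \<and> w!j = x"
proof -
  assume a: "2 \<le> count (mset w) x"
  define S where "S = {k. k < length w \<and> w!k = x}"
  have fin: "finite S" unfolding S_def by (rule finite_subset[of _ "{..<length w}"]) auto
  have "2 \<le> card S" using a unfolding S_def by (simp only: count_mset_card)
  then have "1 < card S" by simp
  then obtain i j where ij: "i \<in> S" "j \<in> S" "i \<noteq> j"
    using card_le_Suc0_iff_eq[OF fin] by (metis One_nat_def not_le)
  have iS: "i < length w" "w!i = x" using ij(1) unfolding S_def by blast+
  have jS: "j < length w" "w!j = x" using ij(2) unfolding S_def by blast+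
  show ?thesis
  proof (cases "i < j")
    case True then show ?thesis using iS jS by blast
  next
    case False then have "j < i" using ij(3) by simp
    then show ?thesis using iS jS by blast
  qed
qed

lemma Seq_D:
  assumes "b \<in> Seq Ba Bc B1 d"
  shows "length b = d" "set b \<subseteq> Ba \<union> Bc \<union> B1"
    "\<And>k l. k < l \<Longrightarrow> l < d \<Longrightarrow> b!k = b!l \<Longrightarrow> b!k \<in> Ba \<union> Bc"
  using assms by (simp_all add: Seq_def tuples_def)

lemma Seq_count_odd:
  assumes "b \<in> Seq Ba Bc B1 d" "B1 \<inter> (Ba \<union> Bc) = {}" "x \<in> B1"
  shows "count (mset b) x \<le> 1"
proof (rule ccontr)
  assume "\<not> count (mset b) x \<le> 1"
  then have c2: "2 \<le> count (mset b) x" by linarith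
  obtain i j where ij: "i < j" "j < length b" "b!i = x" "b!j = x" using count_ge2_D[OF c2] by blast
  have "j < d" using Seq_D(1)[OF assms(1)] ij(2) by simp
  then have "b!i \<in> Ba \<union> Bc" using Seq_D(3)[OF assms(1) ij(1)] ij(3,4) by simp
  then show False using assms(2,3) ij by auto
qed

lemma odd_inv_pc: "odd_inv Od bs = pc (\<lambda>x y. x \<in> Od \<and> y \<in> Od \<and> x > y) bs"
  by (simp add: odd_inv_def pc_def)

lemma odd_inv_swp_sign:
  assumes i: "Suc i < length w"
    and nd: "\<not> (w!i \<in> Od \<and> w!Suc i \<in> Od \<and> w!i = w!Suc i)"
  shows "((-1)::'r::comm_ring_1) ^ (odd_inv Od (swp i w)) =
         (if w!i \<in> Od \<and> w!Suc i \<in> Od then -1 else 1) * (-1) ^ (odd_inv Od w)"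
proof -
  have e: "odd_inv Od (swp i w) + of_bool (w!i \<in> Od \<and> w!Suc i \<in> Od \<and> w!i > w!Suc i)
      = odd_inv Od w + of_bool (w!Suc i \<in> Od \<and> w!i \<in> Od \<and> w!Suc i > w!i)"
    using pc_swp[OF i, of "\<lambda>x y. x \<in> Od \<and> y \<in> Od \<and> x > y"] by (simp add: odd_inv_pc)
  show ?thesis
  proof (cases "w!i \<in> Od \<and> w!Suc i \<in> Od")
    case True
    then have "w!i \<noteq> w!Suc i" using nd by auto
    then consider "w!i > w!Suc i" | "w!i < w!Suc i" by fastforce
    then show ?thesis
    proof cases
      case 1
      then have "\<not> w!Suc i > w!i" by simp
      then have "odd_inv Od (swp i w) + 1 = odd_inv Od w" using e True 1 by simp
      then have h: "odd_inv Od w = Suc (odd_inv Od (swp i w))" by simp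
      show ?thesis unfolding h using True by simp
    next
      case 2
      then have "\<not> w!i > w!Suc i" by simp
      then have "odd_inv Od (swp i w) = odd_inv Od w + 1" using e True 2 by simp
      then show ?thesis using True by simp
    qed
  next
    case False
    then have "odd_inv Od (swp i w) = odd_inv Od w" using e by auto
    then show ?thesis using False by (simp only: if_False) simp
  qed
qed

definition SSprop :: "'b set \<Rightarrow> ('b list \<Rightarrow> 'r::comm_ring_1) \<Rightarrow> bool" where
  "SSprop Od f \<longleftrightarrow> (\<forall>w i. Suc i < length w \<longrightarrow>
      f (swp i w) = (if w!i \<in> Od \<and> w!Suc i \<in> Od then -1 else 1) * f w)"

lemma y_vec_SS:
  assumes "b \<in> Seq Ba Bc B1 d" "B1 \<inter> (Ba \<union> Bc) = {}"
  shows "SSprop B1 (y_vec Bc B1 b :: 'b::linorder list \<Rightarrow> 'r::comm_ring_1)"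
  unfolding SSprop_def
proof (intro allI impI)
  fix w :: "'b list" and i assume i: "Suc i < length w"
  show "y_vec Bc B1 b (swp i w) = (if w!i \<in> B1 \<and> w!Suc i \<in> B1 then -1 else 1) * (y_vec Bc B1 b w :: 'r)"
  proof (cases "mset w = mset b")
    case False then show ?thesis using i by (simp add: y_vec_def x_vec_def)
  next
    case True
    have nd: "\<not> (w!i \<in> B1 \<and> w!Suc i \<in> B1 \<and> w!i = w!Suc i)"
    proof
      assume a: "w!i \<in> B1 \<and> w!Suc i \<in> B1 \<and> w!i = w!Suc i"
      then have "2 \<le> count (mset w) (w!i)" using count_ge2_I[of i "Suc i" w] i by simp
      moreover have "count (mset b) (w!i) \<le> 1" using Seq_count_odd[OF assms] a by simp
      ultimately show False using True by simp
    qed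
    have sg: "((-1)::'r) ^ odd_inv B1 (swp i w) = (if w!i \<in> B1 \<and> w!Suc i \<in> B1 then -1 else 1) * (-1) ^ odd_inv B1 w"
      by (rule odd_inv_swp_sign[OF i nd])
    have ms: "mset (swp i w) = mset b" using True i by simp
    show ?thesis unfolding y_vec_def x_vec_def using ms True sg by (simp add: power_add)
  qed
qed

lemma Gamma_tilde_SS:
  assumes "f \<in> Gamma_tilde Ba Bc B1 d" "B1 \<inter> (Ba \<union> Bc) = {}"
  shows "SSprop B1 (f :: 'b::linorder list \<Rightarrow> 'r::comm_ring_1)"
proof -
  obtain c where f: "f = (\<lambda>w. \<Sum>bs\<in>Seq Ba Bc B1 d. c bs * y_vec Bc B1 bs w)"
    using assms(1) by (auto simp: Gamma_tilde_def)
  show ?thesis unfolding SSprop_def f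
  proof (intro allI impI)
    fix w :: "'b list" and i assume i: "Suc i < length w"
    have "c bs * y_vec Bc B1 bs (swp i w) =
        (if w!i \<in> B1 \<and> w!Suc i \<in> B1 then -1 else 1) * (c bs * y_vec Bc B1 bs w)"
      if bs: "bs \<in> Seq Ba Bc B1 d" for bs
    proof -
      have "y_vec Bc B1 bs (swp i w) = (if w!i \<in> B1 \<and> w!Suc i \<in> B1 then -1 else 1) * (y_vec Bc B1 bs w :: 'r)"
        using y_vec_SS[OF bs assms(2), where 'r='r] i unfolding SSprop_def by blast
      then show ?thesis by simp
    qed
    then show "(\<Sum>bs\<in>Seq Ba Bc B1 d. c bs * y_vec Bc B1 bs (swp i w)) =
      (if w!i \<in> B1 \<and> w!Suc i \<in> B1 then -1 else 1) * (\<Sum>bs\<in>Seq Ba Bc B1 d. c bs * y_vec Bc B1 bs w)"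
      by (simp add: sum_distrib_left)
  qed
qed



lemma swp_id: "xs!i = xs!Suc i \<Longrightarrow> swp i xs = xs"
  by (simp add: swp_def) (metis list_update_id)

lemma sign_sq: "(if P then -1 else 1) * (if P then -1 else 1) = (1::'r::comm_ring_1)"
  by simp

lemma finite_tuples: "finite B \<Longrightarrow> finite (tuples B d)"
  unfolding tuples_def by (rule finite_lists_length_eq)

lemma finite_Seq: "finite (Ba \<union> Bc \<union> B1) \<Longrightarrow> finite (Seq Ba Bc B1 d)"
  by (rule finite_subset[OF _ finite_tuples[of "Ba \<union> Bc \<union> B1" d]]) (auto simp: Seq_def)

lemma Gamma_tilde_char:
  fixes f :: "'b::linorder list \<Rightarrow> 'r::{idom,ring_char_0}"
  assumes fin: "finite (Ba \<union> Bc \<union> B1)"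
    and disj: "B1 \<inter> (Ba \<union> Bc) = {}"
    and S: "\<And>w. w \<notin> tuples (Ba \<union> Bc \<union> B1) d \<Longrightarrow> f w = 0"
    and SS: "SSprop B1 f"
    and D: "\<And>w. w \<in> Seq Ba Bc B1 d \<Longrightarrow> sorted w \<Longrightarrow> of_nat (fact_c Bc w) dvd f w"
  shows "f \<in> Gamma_tilde Ba Bc B1 d"
proof -
  have SS': "f (swp i w) = (if w!i \<in> B1 \<and> w!Suc i \<in> B1 then -1 else 1) * f w"
    if "Suc i < length w" for i w using SS that unfolding SSprop_def by blast
  have step1: "((-1) ^ odd_inv B1 w) * f w = ((-1) ^ odd_inv B1 (sort w)) * f (sort w)"
    if Q: "\<forall>x\<in>B1. count (mset w) x \<le> 1" for w
  proof (rule swap_invariant_sort[where Q = "\<lambda>M. \<forall>x\<in>B1. count M x \<le> 1"])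
    fix z :: "'b list" and i
    assume Qz: "\<forall>x\<in>B1. count (mset z) x \<le> 1" and i: "Suc i < length z"
    have nd: "\<not> (z!i \<in> B1 \<and> z!Suc i \<in> B1 \<and> z!i = z!Suc i)"
    proof
      assume a: "z!i \<in> B1 \<and> z!Suc i \<in> B1 \<and> z!i = z!Suc i"
      have "2 \<le> count (mset z) (z!i)" using count_ge2_I[of i "Suc i" z] i a by simp
      moreover have "count (mset z) (z!i) \<le> 1" using Qz a by blast
      ultimately show False by linarith
    qed
    show "(-1) ^ odd_inv B1 (swp i z) * f (swp i z) = (-1) ^ odd_inv B1 z * f z"
      using odd_inv_swp_sign[OF i nd, where 'r='r] SS'[OF i] by simp
  qed (use Q in simp)
  have step2: "f w * f w = f (sort w) * f (sort w)" for w
  proof (rule swap_invariant_sort[where Q = "\<lambda>M. True"])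
    fix z :: "'b list" and i
    assume i: "Suc i < length z"
    show "f (swp i z) * f (swp i z) = f z * f z" using SS'[OF i] by simp
  qed simp
  have step3: "f w = 0" if w: "w \<in> tuples (Ba \<union> Bc \<union> B1) d" and ns: "sort w \<notin> Seq Ba Bc B1 d" for w
  proof -
    let ?s = "sort w"
    have st: "?s \<in> tuples (Ba \<union> Bc \<union> B1) d" using w by (simp add: tuples_def)
    then obtain k l where kl: "k < l" "l < d" "?s!k = ?s!l" "?s!k \<notin> Ba \<union> Bc"
      using ns unfolding Seq_def by blast
    have ls: "length ?s = d" using st by (simp add: tuples_def)
    have "?s!k \<in> set ?s" using kl ls by (intro nth_mem) simp
    then have odd: "?s!k \<in> B1" using st kl(4) by (auto simp: tuples_def)
    have "?s!k \<le> ?s!Suc k" "?s!Suc k \<le> ?s!l"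
      using sorted_nth_mono[OF sorted_sort, of k "Suc k" w] sorted_nth_mono[OF sorted_sort, of "Suc k" l w] kl ls
      by auto
    then have eq: "?s!k = ?s!Suc k" using kl(3) by simp
    have i: "Suc k < length ?s" using kl ls by simp
    have "f ?s = - f ?s" using SS'[OF i] swp_id[OF eq] eq odd by simp
    then have "f ?s = 0" by (simp add: eq_neg_iff_add_eq_0)
    then have "f w * f w = 0" using step2[of w] by simp
    then show ?thesis by simp
  qed
  define c where "c bs = (if sorted bs then (SOME k. f bs = of_nat (fact_c Bc bs) * k) else 0)" for bs
  have fw: "f w = (\<Sum>bs\<in>Seq Ba Bc B1 d. c bs * y_vec Bc B1 bs w)" for w
  proof -
    have trm: "c bs * y_vec Bc B1 bs w = (if sort w = bs then c bs * y_vec Bc B1 bs w else 0)" for bs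
    proof (cases "sort w = bs")
      case False
      show ?thesis
      proof (cases "sorted bs \<and> mset bs = mset w")
        case True
        then have "sort w = bs" using properties_for_sort by blast
        then show ?thesis using False by simp
      next
        case False
        then show ?thesis by (auto simp: c_def y_vec_def x_vec_def)
      qed
    qed simp
    have sum: "(\<Sum>bs\<in>Seq Ba Bc B1 d. c bs * y_vec Bc B1 bs w) =
        (if sort w \<in> Seq Ba Bc B1 d then c (sort w) * y_vec Bc B1 (sort w) w else 0)"
      by (subst sum.cong[OF refl trm]) (simp add: sum.delta'[OF finite_Seq[OF fin]])
    show ?thesis
    proof (cases "sort w \<in> Seq Ba Bc B1 d")
      case True
      let ?s = "sort w"
      have "of_nat (fact_c Bc ?s) dvd f ?s" using D[OF True] by simp
      then have "f ?s = of_nat (fact_c Bc ?s) * (SOME k. f ?s = of_nat (fact_c Bc ?s) * k)"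
        by (metis (mono_tags, lifting) dvd_def someI_ex)
      then have cs: "c ?s * of_nat (fact_c Bc ?s) = f ?s" by (simp add: c_def mult.commute)
      have Q: "\<forall>x\<in>B1. count (mset w) x \<le> 1"
        using Seq_count_odd[OF True disj] by simp
      have "c ?s * y_vec Bc B1 ?s w = f ?s * (-1) ^ (odd_inv B1 ?s + odd_inv B1 w)"
        using cs by (simp add: y_vec_def x_vec_def mult.assoc)
      also have "\<dots> = f w"
      proof -
        have sq: "((-1::'r) ^ odd_inv B1 w) * ((-1) ^ odd_inv B1 w) = 1"
          by (simp add: power_add[symmetric])
        have "f ?s * (-1) ^ (odd_inv B1 ?s + odd_inv B1 w) =
            ((-1) ^ odd_inv B1 ?s * f ?s) * (-1) ^ odd_inv B1 w" by (simp add: power_add algebra_simps)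
        also have "\<dots> = ((-1) ^ odd_inv B1 w * f w) * (-1) ^ odd_inv B1 w" using step1[OF Q] by simp
        also have "\<dots> = f w * (((-1::'r) ^ odd_inv B1 w) * ((-1) ^ odd_inv B1 w))" by (simp add: algebra_simps)
        finally show ?thesis using sq by simp
      qed
      finally show ?thesis using sum True by simp
    next
      case False
      then have "f w = 0" using S step3 by blast
      then show ?thesis using sum False by simp
    qed
  qed
  show ?thesis unfolding Gamma_tilde_def using fw by blast
qed



lemma tuples_swp: "Suc i < d \<Longrightarrow> as \<in> tuples X d \<Longrightarrow> swp i as \<in> tuples X d"
  by (simp add: tuples_def)

lemma sum_tuples_swp:
  assumes "Suc i < d"
  shows "(\<Sum>as\<in>tuples X d. g as) = (\<Sum>as\<in>tuples X d. g (swp i as))"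
  by (rule sum.reindex_bij_witness[of _ "swp i" "swp i"])
     (use assms in \<open>auto simp: tuples_swp tuples_def\<close>)

lemma prod_tr:
  assumes "Suc i < d"
  shows "(\<Prod>k<d. h (tr i k)) = (\<Prod>k<d. (h k :: 'a::comm_monoid_mult))"
  by (rule prod.reindex_bij_witness[of _ "tr i" "tr i"]) (use assms in \<open>auto simp: tr_lt\<close>)

lemma cross_odd_pc:
  assumes "length vs = length as"
  shows "cross_odd C1 B1 as vs = pc (\<lambda>p q. snd p \<in> B1 \<and> fst q \<in> C1) (zip as vs)"
proof -
  have "{(l,k). l < k \<and> k < length (zip as vs) \<and> snd (zip as vs ! l) \<in> B1 \<and> fst (zip as vs ! k) \<in> C1}
      = prod.swap ` {(k,l). l < k \<and> k < length as \<and> as!k \<in> C1 \<and> vs!l \<in> B1}"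
    using assms by (auto simp: image_iff)
  moreover have "inj_on prod.swap X" for X :: "(nat \<times> nat) set" by (metis inj_on_def swap_swap)
  ultimately show ?thesis unfolding cross_odd_def pc_def by (simp add: card_image)
qed

lemma cross_odd_swp:
  assumes i: "Suc i < length as" and l: "length vs = length as"
  shows "cross_odd C1 B1 (swp i as) (swp i vs) + of_bool (vs!i \<in> B1 \<and> as!Suc i \<in> C1)
       = cross_odd C1 B1 as vs + of_bool (vs!Suc i \<in> B1 \<and> as!i \<in> C1)"
proof -
  have "cross_odd C1 B1 (swp i as) (swp i vs) = pc (\<lambda>p q. snd p \<in> B1 \<and> fst q \<in> C1) (swp i (zip as vs))"
    using cross_odd_pc[of "swp i vs" "swp i as"] l zip_swp[OF i l] by simp
  then show ?thesis
    using pc_swp[of i "zip as vs" "\<lambda>p q. snd p \<in> B1 \<and> fst q \<in> C1"] i l cross_odd_pc[OF l] by simp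
qed

lemma neg1_shift:
  "n' + of_bool a = n + of_bool b \<Longrightarrow>
   ((-1)::'r::comm_ring_1)^n' = (-1)^n * (if a then -1 else 1) * (if b then -1 else 1)"
  by (cases a; cases b) auto

lemma sign_identity:
  "r0 = (p0 \<noteq> q0) \<Longrightarrow> r1 = (p1 \<noteq> q1) \<Longrightarrow>
   (if p0 \<and> p1 then -1 else 1) * (if q0 \<and> q1 then -1 else 1) *
   ((if q0 \<and> p1 then -1 else 1) * (if q1 \<and> p0 then -1 else 1)) = (if r0 \<and> r1 then -1 else (1::'r::comm_ring_1))"
  by (cases p0; cases p1; cases q0; cases q1) auto

lemma tensor_SS:
  fixes act :: "'c::linorder \<Rightarrow> 'b::linorder \<Rightarrow> 'b \<Rightarrow> 'r::idom"
  assumes par: "\<And>x v w. x \<in> Ca \<union> Cc \<union> C1 \<Longrightarrow> v \<in> Ba \<union> Bc \<union> B1 \<Longrightarrow> act x v w \<noteq> 0 \<Longrightarrow>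
       (w \<in> B1) = ((x \<in> C1) \<noteq> (v \<in> B1))"
    and SSe: "SSprop C1 eta" and SSy: "SSprop B1 y"
  shows "SSprop B1 (tensor_act Ca Cc C1 Ba Bc B1 act d eta y)"
  unfolding SSprop_def
proof (intro allI impI)
  fix w :: "'b list" and i assume i: "Suc i < length w"
  let ?C = "Ca \<union> Cc \<union> C1" and ?B = "Ba \<union> Bc \<union> B1"
  let ?sw = "(if w!i \<in> B1 \<and> w!Suc i \<in> B1 then -1 else 1) :: 'r"
  show "tensor_act Ca Cc C1 Ba Bc B1 act d eta y (swp i w) = ?sw * tensor_act Ca Cc C1 Ba Bc B1 act d eta y w"
  proof (cases "w \<in> tuples ?B d")
    case False
    then have "swp i w \<notin> tuples ?B d" using i by (simp add: tuples_def)
    then show ?thesis using False by (simp add: tensor_act_def)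
  next
    case True
    have ld: "length w = d" using True by (simp add: tuples_def)
    have id: "Suc i < d" using i ld by simp
    have sT: "swp i w \<in> tuples ?B d" using tuples_swp[OF id True] .
    define F where "F as vs = eta as * y vs * (-1) ^ cross_odd C1 B1 as vs * (\<Prod>k<d. act (as!k) (vs!k) (w!k))" for as vs
    have key: "eta (swp i as) * y (swp i vs) * (-1) ^ cross_odd C1 B1 (swp i as) (swp i vs) *
         (\<Prod>k<d. act (swp i as!k) (swp i vs!k) (swp i w!k)) = ?sw * F as vs"
      if as: "as \<in> tuples ?C d" and vs: "vs \<in> tuples ?B d" for as vs
    proof -
      have la: "length as = d" and lv: "length vs = d" using as vs by (auto simp: tuples_def)
      have P: "(\<Prod>k<d. act (swp i as!k) (swp i vs!k) (swp i w!k)) = (\<Prod>k<d. act (as!k) (vs!k) (w!k))"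
      proof -
        have "(\<Prod>k<d. act (swp i as!k) (swp i vs!k) (swp i w!k)) = (\<Prod>k<d. act (as!tr i k) (vs!tr i k) (w!tr i k))"
          by (rule prod.cong) (use id la lv ld in \<open>auto simp: nth_swp\<close>)
        also have "\<dots> = (\<Prod>k<d. act (as!k) (vs!k) (w!k))"
          using prod_tr[OF id, of "\<lambda>k. act (as!k) (vs!k) (w!k)"] .
        finally show ?thesis .
      qed
      show ?thesis
      proof (cases "(\<Prod>k<d. act (as!k) (vs!k) (w!k)) = 0")
        case True then show ?thesis using P by (simp add: F_def)
      next
        case False
        then have nz: "act (as!k) (vs!k) (w!k) \<noteq> 0" if "k < d" for k
          using that by (simp add: prod_zero_iff)
        have mem: "as!k \<in> ?C" "vs!k \<in> ?B" if "k < d" for k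
        proof -
          have "as!k \<in> set as" "vs!k \<in> set vs" using that la lv by auto
          then show "as!k \<in> ?C" "vs!k \<in> ?B" using as vs by (auto simp: tuples_def)
        qed
        have r0: "(w!i \<in> B1) = ((as!i \<in> C1) \<noteq> (vs!i \<in> B1))"
          using par[OF mem[of i] nz[of i]] id by simp
        have r1: "(w!Suc i \<in> B1) = ((as!Suc i \<in> C1) \<noteq> (vs!Suc i \<in> B1))"
          using par[OF mem[of "Suc i"] nz[of "Suc i"]] id by simp
        have e1: "eta (swp i as) = (if as!i \<in> C1 \<and> as!Suc i \<in> C1 then -1 else 1) * eta as"
          using SSe id la unfolding SSprop_def by simp
        have e2: "y (swp i vs) = (if vs!i \<in> B1 \<and> vs!Suc i \<in> B1 then -1 else 1) * y vs"
          using SSy id lv unfolding SSprop_def by simp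
        have e3: "((-1)::'r) ^ cross_odd C1 B1 (swp i as) (swp i vs) = (-1) ^ cross_odd C1 B1 as vs *
            (if vs!i \<in> B1 \<and> as!Suc i \<in> C1 then -1 else 1) * (if vs!Suc i \<in> B1 \<and> as!i \<in> C1 then -1 else 1)"
          by (rule neg1_shift) (rule cross_odd_swp, use id la lv in auto)
        have sgn: "(if as!i \<in> C1 \<and> as!Suc i \<in> C1 then -1 else 1) * (if vs!i \<in> B1 \<and> vs!Suc i \<in> B1 then -1 else 1) *
            ((if vs!i \<in> B1 \<and> as!Suc i \<in> C1 then -1 else 1) * (if vs!Suc i \<in> B1 \<and> as!i \<in> C1 then -1 else 1)) = ?sw"
          by (rule sign_identity[OF r0 r1])
        show ?thesis unfolding F_def P e1 e2 e3
          using sgn by (simp add: algebra_simps)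
      qed
    qed
    have "tensor_act Ca Cc C1 Ba Bc B1 act d eta y (swp i w) =
        (\<Sum>as\<in>tuples ?C d. \<Sum>vs\<in>tuples ?B d. eta as * y vs * (-1) ^ cross_odd C1 B1 as vs *
           (\<Prod>k<d. act (as!k) (vs!k) (swp i w!k)))"
      using sT by (simp add: tensor_act_def)
    also have "\<dots> = (\<Sum>as\<in>tuples ?C d. \<Sum>vs\<in>tuples ?B d. eta (swp i as) * y (swp i vs) *
           (-1) ^ cross_odd C1 B1 (swp i as) (swp i vs) * (\<Prod>k<d. act (swp i as!k) (swp i vs!k) (swp i w!k)))"
      by (subst sum_tuples_swp[OF id], rule sum.cong[OF refl], subst sum_tuples_swp[OF id], rule refl)
    also have "\<dots> = (\<Sum>as\<in>tuples ?C d. \<Sum>vs\<in>tuples ?B d. ?sw * F as vs)"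
      using key by (intro sum.cong refl) auto
    also have "\<dots> = ?sw * tensor_act Ca Cc C1 Ba Bc B1 act d eta y w"
      using True by (simp add: tensor_act_def F_def sum_distrib_left)
    finally show ?thesis .
  qed
qed



definition mfact :: "'a multiset \<Rightarrow> nat" where
  "mfact M = (\<Prod>t\<in>set_mset M. fact (count M t))"

lemma mfact_superset:
  assumes "finite X" "set_mset M \<subseteq> X"
  shows "mfact M = (\<Prod>t\<in>X. fact (count M t))"
  unfolding mfact_def
  by (rule prod.mono_neutral_left) (use assms in \<open>auto simp: not_in_iff\<close>)

lemma mfact_remove:
  assumes t: "t \<in># M"
  shows "mfact M = count M t * mfact (M - {#t#})"
proof -
  let ?X = "set_mset M"
  have fX: "finite ?X" by simp
  have sub: "set_mset (M - {#t#}) \<subseteq> ?X" by (meson in_diffD subsetI)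
  have "mfact M = fact (count M t) * (\<Prod>s\<in>?X - {t}. fact (count M s))"
    unfolding mfact_def using t by (simp add: prod.remove)
  moreover have "mfact (M - {#t#}) = fact (count M t - 1) * (\<Prod>s\<in>?X - {t}. fact (count M s))"
  proof -
    have "mfact (M - {#t#}) = (\<Prod>s\<in>?X. fact (count (M - {#t#}) s))"
      by (rule mfact_superset[OF fX sub])
    also have "\<dots> = fact (count (M - {#t#}) t) * (\<Prod>s\<in>?X - {t}. fact (count (M - {#t#}) s))"
      using t by (simp add: prod.remove)
    also have "(\<Prod>s\<in>?X - {t}. fact (count (M - {#t#}) s)) = (\<Prod>s\<in>?X - {t}. fact (count M s))"
      by (rule prod.cong) auto
    finally show ?thesis by simp
  qed
  moreover have "fact (count M t) = count M t * (fact (count M t - 1) :: nat)"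
    using t by (simp add: fact_reduce)
  ultimately show ?thesis by simp
qed

definition Zs :: "('a \<times> 'b \<times> 'c) multiset \<Rightarrow> 'c list \<Rightarrow> ('a \<times> 'b \<times> 'c) list set" where
  "Zs M w = {z. map (snd \<circ> snd) z = w \<and> mset z = M}"

lemma finite_Zs: "finite (Zs M w)"
proof (rule finite_subset)
  show "Zs M w \<subseteq> {z. set z \<subseteq> set_mset M \<and> length z = size M}"
    unfolding Zs_def by auto
  show "finite {z. set z \<subseteq> set_mset M \<and> length z = size M}"
    by (rule finite_lists_length_eq) simp
qed

lemma Zs_Cons:
  "Zs M (u # w0) = (\<Union>t\<in>{t\<in>set_mset M. snd (snd t) = u}. (\<lambda>z. t # z) ` Zs (M - {#t#}) w0)"
proof (intro equalityI subsetI)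
  fix z assume z: "z \<in> Zs M (u # w0)"
  then have z1: "map (snd \<circ> snd) z = u # w0" and z2: "mset z = M" unfolding Zs_def by simp_all
  then obtain t z0 where tz: "z = t # z0" by (cases z) simp_all
  have a: "snd (snd t) = u" "map (snd \<circ> snd) z0 = w0" using z1 tz by simp_all
  have b: "mset z0 = M - {#t#}" "t \<in># M" using z2 tz by auto
  have "z0 \<in> Zs (M - {#t#}) w0" unfolding Zs_def using a b by simp
  then have "z \<in> (\<lambda>z. t # z) ` Zs (M - {#t#}) w0" using tz by simp
  moreover have "t \<in> {t\<in>set_mset M. snd (snd t) = u}" using a b by simp
  ultimately show "z \<in> (\<Union>t\<in>{t\<in>set_mset M. snd (snd t) = u}. (\<lambda>z. t # z) ` Zs (M - {#t#}) w0)"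
    by blast
next
  fix z assume "z \<in> (\<Union>t\<in>{t\<in>set_mset M. snd (snd t) = u}. (\<lambda>z. t # z) ` Zs (M - {#t#}) w0)"
  then obtain t z0 where t: "t \<in># M" "snd (snd t) = u" and z0: "z0 \<in> Zs (M - {#t#}) w0" and z: "z = t # z0"
    by blast
  have "map (snd \<circ> snd) z0 = w0" "mset z0 = M - {#t#}" using z0 unfolding Zs_def by simp_all
  then show "z \<in> Zs M (u # w0)" unfolding Zs_def using t z by simp
qed

lemma Zs_count:
  "image_mset (snd \<circ> snd) M = mset w \<Longrightarrow> card (Zs M w) * mfact M = mfact (mset w)"
proof (induction w arbitrary: M)
  case Nil
  then have M: "M = {#}" by simp
  have Z: "Zs {#} [] = {[]}" unfolding Zs_def by auto
  have "card (Zs M []) = 1" unfolding M Z by simp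
  then show ?case using M by (simp add: mfact_def)
next
  case (Cons u w0)
  let ?T = "{t\<in>set_mset M. snd (snd t) = u}"
  have fT: "finite ?T" by simp
  have IH: "card (Zs (M - {#t#}) w0) * mfact (M - {#t#}) = mfact (mset w0)" if "t \<in> ?T" for t
  proof -
    have "{#t#} \<subseteq># M" using that by simp
    then have "image_mset (snd \<circ> snd) (M - {#t#}) = image_mset (snd \<circ> snd) M - {#u#}"
      using that by (simp add: image_mset_Diff)
    also have "\<dots> = mset w0" using Cons.prems by (metis add_mset_remove_trivial mset.simps(2))
    finally show ?thesis by (rule Cons.IH)
  qed
  have card: "card (Zs M (u # w0)) = (\<Sum>t\<in>?T. card (Zs (M - {#t#}) w0))"
  proof -
    have "card (Zs M (u # w0)) = (\<Sum>t\<in>?T. card ((\<lambda>z. t # z) ` Zs (M - {#t#}) w0))"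
      unfolding Zs_Cons by (rule card_UN_disjoint) (auto simp: finite_Zs)
    also have "\<dots> = (\<Sum>t\<in>?T. card (Zs (M - {#t#}) w0))"
      by (rule sum.cong) (auto simp: card_image)
    finally show ?thesis .
  qed
  have "card (Zs M (u # w0)) * mfact M = (\<Sum>t\<in>?T. card (Zs (M - {#t#}) w0) * mfact M)"
    unfolding card by (simp add: sum_distrib_right)
  also have "\<dots> = (\<Sum>t\<in>?T. mfact (mset w0) * count M t)"
  proof (rule sum.cong[OF refl])
    fix t assume t: "t \<in> ?T"
    then have "mfact M = count M t * mfact (M - {#t#})" using mfact_remove by auto
    then show "card (Zs (M - {#t#}) w0) * mfact M = mfact (mset w0) * count M t"
      using IH[OF t] by (simp add: algebra_simps)
  qed
  also have "\<dots> = mfact (mset w0) * count (image_mset (snd \<circ> snd) M) u"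
  proof -
    have "count (image_mset (snd \<circ> snd) M) u = (\<Sum>t\<in>(snd \<circ> snd) -` {u} \<inter> set_mset M. count M t)"
      by (rule count_image_mset)
    also have "(snd \<circ> snd) -` {u} \<inter> set_mset M = ?T" by auto
    finally have cnt: "count (image_mset (snd \<circ> snd) M) u = (\<Sum>t\<in>?T. count M t)" .
    show ?thesis by (simp only: cnt sum_distrib_left)
  qed
  also have "\<dots> = mfact (mset (u # w0))"
  proof -
    have "u \<in># mset (u # w0)" by simp
    then have "mfact (mset (u # w0)) = count (mset (u # w0)) u * mfact (mset (u # w0) - {#u#})"
      by (rule mfact_remove)
    moreover have im: "image_mset (snd \<circ> snd) M = mset (u # w0)" using Cons.prems .
    moreover have "mset (u # w0) - {#u#} = mset w0" by simp
    ultimately show ?thesis by (simp only: mult.commute)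
  qed
  finally show ?case .
qed

lemma prod_fact_dvd_fact_sum:
  "finite S \<Longrightarrow> (\<Prod>t\<in>S. fact (f t)) dvd (fact (\<Sum>t\<in>S. f t) :: nat)"
proof (induction S rule: finite_induct)
  case empty then show ?case by simp
next
  case (insert x S)
  have "(\<Prod>t\<in>insert x S. fact (f t)) = fact (f x) * (\<Prod>t\<in>S. fact (f t) :: nat)"
    using insert by simp
  also have "\<dots> dvd fact (f x) * fact (\<Sum>t\<in>S. f t)"
    by (intro mult_dvd_mono dvd_refl insert.IH)
  also have "\<dots> dvd fact (f x + (\<Sum>t\<in>S. f t))" by (rule fact_fact_dvd_fact)
  finally show ?case using insert by simp
qed

lemma group_fact_dvd:
  assumes fS: "finite S" and fT: "finite T" and gST: "g ` S \<subseteq> T"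
    and le: "\<And>y. y \<in> T \<Longrightarrow> (\<Sum>t\<in>{t. t \<in> S \<and> g t = y}. f t) \<le> m y"
  shows "(\<Prod>t\<in>S. fact (f t)) dvd (\<Prod>y\<in>T. fact (m y) :: nat)"
proof -
  have "(\<Prod>t\<in>S. fact (f t)) = (\<Prod>y\<in>T. \<Prod>t\<in>{t. t \<in> S \<and> g t = y}. fact (f t) :: nat)"
    by (rule prod.group[OF fS fT gST, symmetric])
  also have "\<dots> dvd (\<Prod>y\<in>T. fact (m y))"
  proof (rule prod_dvd_prod)
    fix y assume y: "y \<in> T"
    have "(\<Prod>t\<in>{t. t \<in> S \<and> g t = y}. fact (f t)) dvd (fact (\<Sum>t\<in>{t. t \<in> S \<and> g t = y}. f t) :: nat)"
      by (rule prod_fact_dvd_fact_sum) (use fS in simp)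
    also have "\<dots> dvd fact (m y)" by (rule fact_dvd[OF le[OF y]])
    finally show "(\<Prod>t\<in>{t. t \<in> S \<and> g t = y}. fact (f t)) dvd (fact (m y) :: nat)" .
  qed
  finally show ?thesis .
qed



lemma cnt_bound:
  assumes "A \<subseteq> set_mset M"
  shows "(\<Sum>t\<in>{t. t \<in> A \<and> g t = y}. count M t) \<le> count (image_mset g M) y"
proof -
  have "(\<Sum>t\<in>{t. t \<in> A \<and> g t = y}. count M t) \<le> (\<Sum>t\<in>g -` {y} \<inter> set_mset M. count M t)"
    by (rule sum_mono2) (use assms in auto)
  also have "\<dots> = count (image_mset g M) y" by (rule count_image_mset[symmetric])
  finally show ?thesis .
qed

lemma nat_div:
  fixes M :: "('c \<times> 'b \<times> 'b) multiset" and w :: "'b list"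
  assumes fCc: "finite Cc" and fBc: "finite Bc"
    and im: "image_mset (snd \<circ> snd) M = mset w"
    and N: "N * mfact M = mfact (mset w)"
    and cond: "\<And>t. t \<in># M \<Longrightarrow> snd (snd t) \<in> Bc \<Longrightarrow> fst t \<in> Cc \<or> fst (snd t) \<in> Bc \<or> count M t \<le> 1"
  shows "(\<Prod>b\<in>Bc. fact (count (mset w) b)) dvd
    (\<Prod>x\<in>Cc. fact (count (image_mset fst M) x)) * (\<Prod>v\<in>Bc. fact (count (image_mset (fst \<circ> snd) M) v)) * (N :: nat)"
proof -
  define S where "S = set_mset M"
  define R where "R = (\<Prod>u\<in>set w - Bc. fact (count (mset w) u) :: nat)"
  define fa where "fa = (\<Prod>x\<in>Cc. fact (count (image_mset fst M) x) :: nat)"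
  define fb where "fb = (\<Prod>v\<in>Bc. fact (count (image_mset (fst \<circ> snd) M) v) :: nat)"
  define fw where "fw = (\<Prod>b\<in>Bc. fact (count (mset w) b) :: nat)"
  have fS: "finite S" unfolding S_def by simp
  have mw: "mfact (mset w) = fw * R"
  proof -
    have "mfact (mset w) = (\<Prod>u\<in>Bc \<union> (set w - Bc). fact (count (mset w) u))"
      by (rule mfact_superset) (use fBc in auto)
    also have "\<dots> = fw * R" unfolding fw_def R_def
      by (rule prod.union_disjoint) (use fBc in auto)
    finally show ?thesis .
  qed
  have thdS: "snd (snd t) \<in> set w" if "t \<in> S" for t
  proof -
    have "snd (snd t) \<in># image_mset (snd \<circ> snd) M" using that unfolding S_def by simp
    then show ?thesis using im by simp
  qed
  let ?h = "\<lambda>t. fact (count M t) :: nat"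
  define S1 where "S1 = S - {t. snd (snd t) \<notin> Bc}"
  define S2 where "S2 = S1 - {t. fst t \<in> Cc}"
  define S3 where "S3 = S2 - {t. fst (snd t) \<in> Bc}"
  have e1: "mfact M = prod ?h (S \<inter> {t. snd (snd t) \<notin> Bc}) * prod ?h S1"
    unfolding mfact_def S1_def S_def by (rule prod.Int_Diff) simp
  have e2: "prod ?h S1 = prod ?h (S1 \<inter> {t. fst t \<in> Cc}) * prod ?h S2"
    unfolding S2_def by (rule prod.Int_Diff) (simp add: S1_def fS)
  have e3: "prod ?h S2 = prod ?h (S2 \<inter> {t. fst (snd t) \<in> Bc}) * prod ?h S3"
    unfolding S3_def by (rule prod.Int_Diff) (simp add: S2_def S1_def fS)
  have d1: "prod ?h (S \<inter> {t. snd (snd t) \<notin> Bc}) dvd R" unfolding R_def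
  proof (rule group_fact_dvd[where g = "snd \<circ> snd"])
    show "finite (S \<inter> {t. snd (snd t) \<notin> Bc})" using fS by simp
    show "(snd \<circ> snd) ` (S \<inter> {t. snd (snd t) \<notin> Bc}) \<subseteq> set w - Bc" using thdS by auto
    fix y
    show "(\<Sum>t\<in>{t. t \<in> S \<inter> {t. snd (snd t) \<notin> Bc} \<and> (snd \<circ> snd) t = y}. count M t) \<le> count (mset w) y"
      using cnt_bound[of "S \<inter> {t. snd (snd t) \<notin> Bc}" M "snd \<circ> snd" y] im unfolding S_def by auto
  qed simp
  have d2: "prod ?h (S1 \<inter> {t. fst t \<in> Cc}) dvd fa" unfolding fa_def
  proof (rule group_fact_dvd[where g = fst])
    show "finite (S1 \<inter> {t. fst t \<in> Cc})" using fS by (simp add: S1_def)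
    show "fst ` (S1 \<inter> {t. fst t \<in> Cc}) \<subseteq> Cc" by auto
    fix y
    show "(\<Sum>t\<in>{t. t \<in> S1 \<inter> {t. fst t \<in> Cc} \<and> fst t = y}. count M t) \<le> count (image_mset fst M) y"
      using cnt_bound[of "S1 \<inter> {t. fst t \<in> Cc}" M fst y] unfolding S1_def S_def by auto
  qed (rule fCc)
  have d3: "prod ?h (S2 \<inter> {t. fst (snd t) \<in> Bc}) dvd fb" unfolding fb_def
  proof (rule group_fact_dvd[where g = "fst \<circ> snd"])
    show "finite (S2 \<inter> {t. fst (snd t) \<in> Bc})" using fS by (simp add: S2_def S1_def)
    show "(fst \<circ> snd) ` (S2 \<inter> {t. fst (snd t) \<in> Bc}) \<subseteq> Bc" by auto
    fix y
    show "(\<Sum>t\<in>{t. t \<in> S2 \<inter> {t. fst (snd t) \<in> Bc} \<and> (fst \<circ> snd) t = y}. count M t) \<le> count (image_mset (fst \<circ> snd) M) y"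
      using cnt_bound[of "S2 \<inter> {t. fst (snd t) \<in> Bc}" M "fst \<circ> snd" y] unfolding S2_def S1_def S_def by auto
  qed (rule fBc)
  have d4: "prod ?h S3 = 1"
  proof (rule prod.neutral, rule ballI)
    fix t assume t: "t \<in> S3"
    then have "t \<in># M" "snd (snd t) \<in> Bc" "fst t \<notin> Cc" "fst (snd t) \<notin> Bc"
      unfolding S3_def S2_def S1_def S_def by auto
    then have "count M t \<le> 1" using cond by blast
    moreover have "count M t \<noteq> 0" using \<open>t \<in># M\<close> by simp
    ultimately have "count M t = 1" by linarith
    then show "fact (count M t) = 1" by simp
  qed
  have "mfact M dvd R * fa * fb"
    unfolding e1 e2 e3 d4 using d1 d2 d3 by (simp add: mult_dvd_mono mult.assoc)
  then obtain q where q: "R * fa * fb = mfact M * q" by (auto simp: dvd_def)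
  have "R * (fa * fb * N) = R * (fw * q)"
  proof -
    have "R * (fa * fb * N) = N * (R * fa * fb)" by (simp add: algebra_simps)
    also have "\<dots> = N * mfact M * q" using q by simp
    also have "\<dots> = fw * R * q" using N mw by simp
    finally show ?thesis by (simp add: algebra_simps)
  qed
  moreover have "R \<noteq> 0" unfolding R_def by (simp add: prod_zero_iff)
  ultimately have "fa * fb * N = fw * q" by simp
  then show ?thesis unfolding fa_def fb_def fw_def by (metis dvd_triv_left)
qed



lemma prod_nth_mset: "(\<Prod>k<length z. f (z!k)) = prod_mset (image_mset f (mset z))"
proof (induction z)
  case Nil then show ?case by simp
next
  case (Cons a z)
  then show ?case by (simp add: prod.lessThan_Suc_shift del: prod.lessThan_Suc)
qed

definition sgz :: "'c::linorder set \<Rightarrow> 'b::linorder set \<Rightarrow> ('c \<times> 'b \<times> 'b) list \<Rightarrow> 'r::comm_ring_1" where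
  "sgz C1 B1 z = (-1) ^ (odd_inv C1 (map fst z) + odd_inv B1 (map (fst \<circ> snd) z) +
      cross_odd C1 B1 (map fst z) (map (fst \<circ> snd) z) + odd_inv B1 (map (snd \<circ> snd) z))"

definition Qm :: "'c set \<Rightarrow> 'b set \<Rightarrow> ('c \<times> 'b \<times> 'b) multiset \<Rightarrow> bool" where
  "Qm C1 B1 M \<longleftrightarrow> (\<forall>t\<in>#M. (snd (snd t) \<in> B1) = ((fst t \<in> C1) \<noteq> (fst (snd t) \<in> B1))) \<and>
     (\<forall>x\<in>C1. count (image_mset fst M) x \<le> 1) \<and>
     (\<forall>v\<in>B1. count (image_mset (fst \<circ> snd) M) v \<le> 1) \<and>
     (\<forall>u\<in>B1. count (image_mset (snd \<circ> snd) M) u \<le> 1)"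

lemma nd_from_count:
  assumes "\<forall>x\<in>Od. count (mset xs) x \<le> 1" "Suc i < length xs"
  shows "\<not> (xs!i \<in> Od \<and> xs!Suc i \<in> Od \<and> xs!i = xs!Suc i)"
proof
  assume a: "xs!i \<in> Od \<and> xs!Suc i \<in> Od \<and> xs!i = xs!Suc i"
  have "2 \<le> count (mset xs) (xs!i)" using count_ge2_I[of i "Suc i" xs] assms(2) a by simp
  moreover have "count (mset xs) (xs!i) \<le> 1" using assms(1) a by blast
  ultimately show False by linarith
qed

lemma sgz_swp:
  assumes Q: "Qm C1 B1 (mset z)" and i: "Suc i < length z"
  shows "sgz C1 B1 (swp i z) = (sgz C1 B1 z :: 'r::comm_ring_1)"
proof -
  define as where "as = map fst z"
  define vs where "vs = map (fst \<circ> snd) z"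
  define ws where "ws = map (snd \<circ> snd) z"
  have la: "Suc i < length as" "Suc i < length vs" "Suc i < length ws" "length vs = length as"
    using i by (simp_all add: as_def vs_def ws_def)
  have ca: "\<forall>x\<in>C1. count (mset as) x \<le> 1" using Q unfolding Qm_def as_def by simp
  have cv: "\<forall>x\<in>B1. count (mset vs) x \<le> 1" using Q unfolding Qm_def vs_def by (simp add: mset_map)
  have cw: "\<forall>x\<in>B1. count (mset ws) x \<le> 1" using Q unfolding Qm_def ws_def by (simp add: mset_map)
  have zi: "z!i \<in># mset z" "z!Suc i \<in># mset z" using i by auto
  have r0: "(ws!i \<in> B1) = ((as!i \<in> C1) \<noteq> (vs!i \<in> B1))"
    using Q zi(1) i unfolding Qm_def as_def vs_def ws_def by auto
  have r1: "(ws!Suc i \<in> B1) = ((as!Suc i \<in> C1) \<noteq> (vs!Suc i \<in> B1))"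
    using Q zi(2) i unfolding Qm_def as_def vs_def ws_def by auto
  have sw: "map fst (swp i z) = swp i as" "map (fst \<circ> snd) (swp i z) = swp i vs"
    "map (snd \<circ> snd) (swp i z) = swp i ws"
    using i by (simp_all add: map_swp as_def vs_def ws_def)
  have eA: "((-1)::'r) ^ odd_inv C1 (swp i as) = (if as!i \<in> C1 \<and> as!Suc i \<in> C1 then -1 else 1) * (-1) ^ odd_inv C1 as"
    by (rule odd_inv_swp_sign[OF la(1) nd_from_count[OF ca la(1)]])
  have eB: "((-1)::'r) ^ odd_inv B1 (swp i vs) = (if vs!i \<in> B1 \<and> vs!Suc i \<in> B1 then -1 else 1) * (-1) ^ odd_inv B1 vs"
    by (rule odd_inv_swp_sign[OF la(2) nd_from_count[OF cv la(2)]])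
  have eW: "((-1)::'r) ^ odd_inv B1 (swp i ws) = (if ws!i \<in> B1 \<and> ws!Suc i \<in> B1 then -1 else 1) * (-1) ^ odd_inv B1 ws"
    by (rule odd_inv_swp_sign[OF la(3) nd_from_count[OF cw la(3)]])
  have eC: "((-1)::'r) ^ cross_odd C1 B1 (swp i as) (swp i vs) = (-1) ^ cross_odd C1 B1 as vs *
            (if vs!i \<in> B1 \<and> as!Suc i \<in> C1 then -1 else 1) * (if vs!Suc i \<in> B1 \<and> as!i \<in> C1 then -1 else 1)"
    by (rule neg1_shift) (rule cross_odd_swp[OF la(1) la(4)])
  have sgn: "(if as!i \<in> C1 \<and> as!Suc i \<in> C1 then -1 else 1) * (if vs!i \<in> B1 \<and> vs!Suc i \<in> B1 then -1 else 1) *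
            ((if vs!i \<in> B1 \<and> as!Suc i \<in> C1 then -1 else 1) * (if vs!Suc i \<in> B1 \<and> as!i \<in> C1 then -1 else 1)) =
      (if ws!i \<in> B1 \<and> ws!Suc i \<in> B1 then -1 else (1::'r))"
    by (rule sign_identity[OF r0 r1])
  have sq: "(if ws!i \<in> B1 \<and> ws!Suc i \<in> B1 then -1 else (1::'r)) * (if ws!i \<in> B1 \<and> ws!Suc i \<in> B1 then -1 else 1) = 1"
    by simp
  have "sgz C1 B1 (swp i z) = ((-1::'r) ^ odd_inv C1 (swp i as)) * (-1) ^ odd_inv B1 (swp i vs) *
      (-1) ^ cross_odd C1 B1 (swp i as) (swp i vs) * (-1) ^ odd_inv B1 (swp i ws)"
    unfolding sgz_def sw by (simp add: power_add)
  also have "\<dots> = ((if as!i \<in> C1 \<and> as!Suc i \<in> C1 then -1 else 1) * (if vs!i \<in> B1 \<and> vs!Suc i \<in> B1 then -1 else 1) *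
            ((if vs!i \<in> B1 \<and> as!Suc i \<in> C1 then -1 else 1) * (if vs!Suc i \<in> B1 \<and> as!i \<in> C1 then -1 else 1))) *
         (if ws!i \<in> B1 \<and> ws!Suc i \<in> B1 then -1 else 1) *
       (((-1::'r) ^ odd_inv C1 as) * (-1) ^ odd_inv B1 vs * (-1) ^ cross_odd C1 B1 as vs * (-1) ^ odd_inv B1 ws)"
    unfolding eA eB eC eW by (simp only: mult_ac)
  also have "\<dots> = ((-1::'r) ^ odd_inv C1 as) * (-1) ^ odd_inv B1 vs * (-1) ^ cross_odd C1 B1 as vs * (-1) ^ odd_inv B1 ws"
    unfolding sgn sq by simp
  also have "\<dots> = sgz C1 B1 z"
    unfolding sgz_def as_def vs_def ws_def by (simp add: power_add)
  finally show ?thesis .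
qed

lemma sgz_sort:
  assumes "Qm C1 B1 (mset z)"
  shows "sgz C1 B1 z = (sgz C1 B1 (sort z) :: 'r::comm_ring_1)"
  by (rule swap_invariant_sort[where Q = "Qm C1 B1", OF sgz_swp assms])



lemma zip_map3: "zip (map fst z) (zip (map (fst \<circ> snd) z) (map (snd \<circ> snd) z)) = z"
  by (induction z) auto

lemma count_le_image: "count M t \<le> count (image_mset f M) (f t)"
proof (cases "t \<in># M")
  case True
  have h: "(\<Sum>t'\<in>{t'. t' \<in> {t} \<and> f t' = f t}. count M t') \<le> count (image_mset f M) (f t)"
    by (rule cnt_bound) (use True in simp)
  have e: "{t'. t' \<in> {t} \<and> f t' = f t} = {t}" by auto
  have s: "(\<Sum>t'\<in>{t}. count M t') = count M t" by simp
  show ?thesis using h unfolding e s .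
next
  case False then show ?thesis by (simp add: not_in_iff)
qed

lemma basis_D:
  fixes act :: "'c::linorder \<Rightarrow> 'b::linorder \<Rightarrow> 'b \<Rightarrow> 'r::{idom,ring_char_0}"
  assumes fC: "finite (Ca \<union> Cc \<union> C1)" and fB: "finite (Ba \<union> Bc \<union> B1)"
    and dC: "C1 \<inter> (Ca \<union> Cc) = {}" and dB: "B1 \<inter> (Ba \<union> Bc) = {}" and dab: "Ba \<inter> Bc = {}"
    and par: "\<And>x v u. x \<in> Ca \<union> Cc \<union> C1 \<Longrightarrow> v \<in> Ba \<union> Bc \<union> B1 \<Longrightarrow> act x v u \<noteq> 0 \<Longrightarrow>
       (u \<in> B1) = ((x \<in> C1) \<noteq> (v \<in> B1))"
    and clo: "\<And>x v u. x \<in> Ca \<Longrightarrow> v \<in> Ba \<Longrightarrow> act x v u \<noteq> 0 \<Longrightarrow> u \<in> Ba"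
    and a: "a \<in> Seq Ca Cc C1 d" and b: "b \<in> Seq Ba Bc B1 d" and w: "w \<in> Seq Ba Bc B1 d"
  shows "of_nat (fact_c Bc w) dvd (\<Sum>as\<in>tuples (Ca \<union> Cc \<union> C1) d. \<Sum>vs\<in>tuples (Ba \<union> Bc \<union> B1) d.
      y_vec Cc C1 a as * y_vec Bc B1 b vs * (-1) ^ cross_odd C1 B1 as vs * (\<Prod>k<d. act (as!k) (vs!k) (w!k)))"
proof -
  let ?C = "Ca \<union> Cc \<union> C1" and ?B = "Ba \<union> Bc \<union> B1"
  define P where "P = tuples ?C d \<times> tuples ?B d"
  define F where "F p = x_vec C1 a (fst p) * x_vec B1 b (snd p) * (-1) ^ cross_odd C1 B1 (fst p) (snd p) *
      (\<Prod>k<d. act (fst p!k) (snd p!k) (w!k))" for p :: "'c list \<times> 'b list"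
  define fa where "fa = fact_c Cc a"
  define fb where "fb = fact_c Bc b"
  define \<kappa> where "\<kappa> p = mset (zip (fst p) (zip (snd p) w))" for p :: "'c list \<times> 'b list"
  define act3 where "act3 t = act (fst t) (fst (snd t)) (snd (snd t))" for t
  have fP: "finite P" unfolding P_def by (intro finite_cartesian_product finite_tuples fC fB)
  have lw: "length w = d" using Seq_D(1)[OF w] .
  have sum_eq: "(\<Sum>as\<in>tuples ?C d. \<Sum>vs\<in>tuples ?B d.
      y_vec Cc C1 a as * y_vec Bc B1 b vs * (-1) ^ cross_odd C1 B1 as vs * (\<Prod>k<d. act (as!k) (vs!k) (w!k)))
      = (\<Sum>p\<in>P. of_nat (fa * fb) * F p)"
    unfolding P_def sum.cartesian_product' F_def fa_def fb_def y_vec_def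
    by (intro sum.cong refl) (simp add: mult_ac)
  have Pz: "length (fst p) = d" "length (snd p) = d" "set (fst p) \<subseteq> ?C" "set (snd p) \<subseteq> ?B"
    if "p \<in> P" for p using that unfolding P_def tuples_def by auto
  have maps: "map fst (zip (fst p) (zip (snd p) w)) = fst p"
      "map (fst \<circ> snd) (zip (fst p) (zip (snd p) w)) = snd p"
      "map (snd \<circ> snd) (zip (fst p) (zip (snd p) w)) = w"
    if "p \<in> P" for p using Pz[OF that] lw by (auto intro!: nth_equalityI)
  have mimg: "image_mset fst (\<kappa> p) = mset (fst p)" "image_mset (fst \<circ> snd) (\<kappa> p) = mset (snd p)"
      "image_mset (snd \<circ> snd) (\<kappa> p) = mset w"
    if "p \<in> P" for p unfolding \<kappa>_def using maps[OF that] by (metis mset_map)+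
  have prodeq: "(\<Prod>k<d. act (fst p!k) (snd p!k) (w!k)) = prod_mset (image_mset act3 (\<kappa> p))"
    if "p \<in> P" for p
  proof -
    let ?z = "zip (fst p) (zip (snd p) w)"
    have lz: "length ?z = d" using Pz[OF that] lw by simp
    have "(\<Prod>k<d. act (fst p!k) (snd p!k) (w!k)) = (\<Prod>k<length ?z. act3 (?z!k))"
      using lz Pz[OF that] lw by (intro prod.cong) (auto simp: act3_def)
    also have "\<dots> = prod_mset (image_mset act3 (\<kappa> p))" unfolding \<kappa>_def by (rule prod_nth_mset)
    finally show ?thesis .
  qed
  have Fnz: "Qm C1 B1 (\<kappa> p) \<and> mset (fst p) = mset a \<and> mset (snd p) = mset b \<and>
      (\<forall>k<d. act (fst p!k) (snd p!k) (w!k) \<noteq> 0)"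
    if p: "p \<in> P" and nz: "F p \<noteq> 0" for p
  proof -
    have ma: "mset (fst p) = mset a" and mb: "mset (snd p) = mset b"
      using nz unfolding F_def x_vec_def by (auto split: if_splits)
    have actnz: "\<forall>k<d. act (fst p!k) (snd p!k) (w!k) \<noteq> 0"
      using nz unfolding F_def by auto
    have memk: "fst p!k \<in> ?C" "snd p!k \<in> ?B" if "k < d" for k
    proof -
      have "fst p!k \<in> set (fst p)" "snd p!k \<in> set (snd p)" using Pz(1,2)[OF p] that by simp_all
      then show "fst p!k \<in> ?C" "snd p!k \<in> ?B" using Pz(3,4)[OF p] by blast+
    qed
    have tk: "\<exists>k<d. t = (fst p!k, snd p!k, w!k)" if "t \<in># \<kappa> p" for t
    proof -
      have "t \<in> set (zip (fst p) (zip (snd p) w))" using that unfolding \<kappa>_def by simp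
      then obtain k where "k < length (zip (fst p) (zip (snd p) w))" "t = zip (fst p) (zip (snd p) w) ! k"
        by (auto simp: in_set_conv_nth)
      then show ?thesis using Pz[OF p] lw by auto
    qed
    have q1: "\<forall>t\<in>#\<kappa> p. (snd (snd t) \<in> B1) = ((fst t \<in> C1) \<noteq> (fst (snd t) \<in> B1))"
    proof
      fix t assume "t \<in># \<kappa> p"
      then obtain k where k: "k < d" "t = (fst p!k, snd p!k, w!k)" using tk by blast
      show "(snd (snd t) \<in> B1) = ((fst t \<in> C1) \<noteq> (fst (snd t) \<in> B1))"
        using par[OF memk[OF k(1)]] actnz k by simp
    qed
    have q2: "\<forall>x\<in>C1. count (image_mset fst (\<kappa> p)) x \<le> 1"
      using Seq_count_odd[OF a dC] mimg(1)[OF p] ma by simp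
    have q3: "\<forall>x\<in>B1. count (image_mset (fst \<circ> snd) (\<kappa> p)) x \<le> 1"
      using Seq_count_odd[OF b dB] mimg(2)[OF p] mb by simp
    have q4: "\<forall>x\<in>B1. count (image_mset (snd \<circ> snd) (\<kappa> p)) x \<le> 1"
      using Seq_count_odd[OF w dB] mimg(3)[OF p] by simp
    show ?thesis using q1 q2 q3 q4 ma mb actnz unfolding Qm_def by blast
  qed
  have Fsplit: "F p = (if mset (fst p) = mset a \<and> mset (snd p) = mset b then
        (-1) ^ (odd_inv C1 a + odd_inv B1 b) * ((-1) ^ (odd_inv C1 (fst p) + odd_inv B1 (snd p) + cross_odd C1 B1 (fst p) (snd p)))
        * prod_mset (image_mset act3 (\<kappa> p)) else 0)" if p: "p \<in> P" for p
    unfolding F_def x_vec_def prodeq[OF p, symmetric] by (simp add: power_add mult_ac)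
  have Esgz: "((-1::'r) ^ (odd_inv C1 (fst p) + odd_inv B1 (snd p) + cross_odd C1 B1 (fst p) (snd p)))
      = sgz C1 B1 (zip (fst p) (zip (snd p) w)) * (-1) ^ odd_inv B1 w" if p: "p \<in> P" for p
  proof -
    have sq: "((-1::'r) ^ odd_inv B1 w) * (-1) ^ odd_inv B1 w = 1" by (simp add: power_add[symmetric])
    show ?thesis unfolding sgz_def maps[OF p] using sq by (simp add: power_add mult_ac)
  qed
  have Fconst: "F p = F p0" if p: "p \<in> P" and p0: "p0 \<in> P" and k: "\<kappa> p = \<kappa> p0" for p p0
  proof (cases "F p0 = 0 \<and> F p = 0")
    case True then show ?thesis by simp
  next
    case False
    have ms: "mset (fst p) = mset (fst p0)" "mset (snd p) = mset (snd p0)"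
      using mimg[OF p] mimg[OF p0] k by metis+
    have pr: "prod_mset (image_mset act3 (\<kappa> p)) = prod_mset (image_mset act3 (\<kappa> p0))" using k by simp
    obtain q where q: "q \<in> {p, p0}" "F q \<noteq> 0" using False by blast
    have qP: "q \<in> P" using q p p0 by auto
    have Q: "Qm C1 B1 (\<kappa> p)" using Fnz[OF qP q(2)] q(1) k by auto
    have Q0: "Qm C1 B1 (\<kappa> p0)" using Q k by simp
    have "sgz C1 B1 (zip (fst p) (zip (snd p) w)) = (sgz C1 B1 (sort (zip (fst p) (zip (snd p) w))) :: 'r)"
      by (rule sgz_sort) (use Q in \<open>simp add: \<kappa>_def\<close>)
    also have "sort (zip (fst p) (zip (snd p) w)) = sort (zip (fst p0) (zip (snd p0) w))"
      by (rule properties_for_sort) (use k in \<open>simp_all add: \<kappa>_def\<close>)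
    also have "sgz C1 B1 (sort (zip (fst p0) (zip (snd p0) w))) = (sgz C1 B1 (zip (fst p0) (zip (snd p0) w)) :: 'r)"
      by (rule sgz_sort[symmetric]) (use Q0 in \<open>simp add: \<kappa>_def\<close>)
    finally have sg: "sgz C1 B1 (zip (fst p) (zip (snd p) w)) = (sgz C1 B1 (zip (fst p0) (zip (snd p0) w)) :: 'r)" .
    show ?thesis unfolding Fsplit[OF p] Fsplit[OF p0] Esgz[OF p] Esgz[OF p0] ms pr sg k by simp
  qed
  have cardF: "card {p. p \<in> P \<and> \<kappa> p = \<kappa> p0} = card (Zs (\<kappa> p0) w)" if p0: "p0 \<in> P" for p0
  proof (rule bij_betw_same_card[of "\<lambda>p. zip (fst p) (zip (snd p) w)"])
    show "bij_betw (\<lambda>p. zip (fst p) (zip (snd p) w)) {p. p \<in> P \<and> \<kappa> p = \<kappa> p0} (Zs (\<kappa> p0) w)"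
    proof (rule bij_betw_byWitness[where f' = "\<lambda>z. (map fst z, map (fst \<circ> snd) z)"])
      show "\<forall>p\<in>{p. p \<in> P \<and> \<kappa> p = \<kappa> p0}. (map fst (zip (fst p) (zip (snd p) w)), map (fst \<circ> snd) (zip (fst p) (zip (snd p) w))) = p"
        using maps by auto
      show "\<forall>z\<in>Zs (\<kappa> p0) w. zip (fst (map fst z, map (fst \<circ> snd) z)) (zip (snd (map fst z, map (fst \<circ> snd) z)) w) = z"
        unfolding Zs_def using zip_map3 by auto
      show "(\<lambda>p. zip (fst p) (zip (snd p) w)) ` {p. p \<in> P \<and> \<kappa> p = \<kappa> p0} \<subseteq> Zs (\<kappa> p0) w"
        unfolding Zs_def using maps by (auto simp: \<kappa>_def)
      show "(\<lambda>z. (map fst z, map (fst \<circ> snd) z)) ` Zs (\<kappa> p0) w \<subseteq> {p. p \<in> P \<and> \<kappa> p = \<kappa> p0}"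
      proof
        fix pz assume "pz \<in> (\<lambda>z. (map fst z, map (fst \<circ> snd) z)) ` Zs (\<kappa> p0) w"
        then obtain z where z: "z \<in> Zs (\<kappa> p0) w" and pz: "pz = (map fst z, map (fst \<circ> snd) z)" by blast
        have z1: "map (snd \<circ> snd) z = w" "mset z = \<kappa> p0" using z unfolding Zs_def by auto
        have lz: "length z = d" using z1(1) lw by (metis length_map)
        have sz: "set z = set (zip (fst p0) (zip (snd p0) w))" using z1(2) unfolding \<kappa>_def by (metis set_mset_mset)
        have "set (map fst z) \<subseteq> ?C"
        proof
          fix x assume "x \<in> set (map fst z)"
          then obtain t where t: "t \<in> set z" "x = fst t" by auto
          then have "t \<in> set (zip (fst p0) (zip (snd p0) w))" using sz by simp
          then have "fst t \<in> set (fst p0)" by (metis prod.collapse set_zip_leftD)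
          then show "x \<in> ?C" using Pz(3)[OF p0] t by auto
        qed
        moreover have "set (map (fst \<circ> snd) z) \<subseteq> ?B"
        proof
          fix x assume "x \<in> set (map (fst \<circ> snd) z)"
          then obtain t where t: "t \<in> set z" "x = fst (snd t)" by auto
          then have "t \<in> set (zip (fst p0) (zip (snd p0) w))" using sz by simp
          then have "snd t \<in> set (zip (snd p0) w)" by (metis prod.collapse set_zip_rightD)
          then have "fst (snd t) \<in> set (snd p0)" by (metis prod.collapse set_zip_leftD)
          then show "x \<in> ?B" using Pz(4)[OF p0] t by auto
        qed
        ultimately have "pz \<in> P" unfolding P_def tuples_def pz using lz by simp
        moreover have "\<kappa> pz = mset z" unfolding pz \<kappa>_def using zip_map3[of z] z1(1) by simp
        then have "\<kappa> pz = \<kappa> p0" using z1(2) by simp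
        ultimately show "pz \<in> {p. p \<in> P \<and> \<kappa> p = \<kappa> p0}" by simp
      qed
    qed
  qed
  have fib: "of_nat (fact_c Bc w) dvd (\<Sum>p\<in>{p. p \<in> P \<and> \<kappa> p = M}. of_nat (fa * fb) * F p)"
    if M: "M \<in> \<kappa> ` P" for M
  proof -
    obtain p0 where p0: "p0 \<in> P" "M = \<kappa> p0" using M by blast
    have "(\<Sum>p\<in>{p. p \<in> P \<and> \<kappa> p = M}. of_nat (fa * fb) * F p) = (\<Sum>p\<in>{p. p \<in> P \<and> \<kappa> p = M}. of_nat (fa * fb) * F p0)"
    proof (rule sum.cong[OF refl])
      fix p assume "p \<in> {p. p \<in> P \<and> \<kappa> p = M}"
      then have "p \<in> P" "\<kappa> p = \<kappa> p0" using p0(2) by auto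
      then have "F p = F p0" using Fconst[of p p0] p0(1) by blast
      then show "of_nat (fa * fb) * F p = of_nat (fa * fb) * F p0" by (rule arg_cong)
    qed
    also have "\<dots> = of_nat (card {p. p \<in> P \<and> \<kappa> p = M}) * (of_nat (fa * fb) * F p0)" by simp
    also have "\<dots> = of_nat (fa * fb * card (Zs M w)) * F p0" using cardF[OF p0(1)] p0(2) by (simp add: mult_ac)
    finally have eq: "(\<Sum>p\<in>{p. p \<in> P \<and> \<kappa> p = M}. of_nat (fa * fb) * F p) = of_nat (fa * fb * card (Zs M w)) * F p0" .
    show ?thesis
    proof (cases "F p0 = 0")
      case True then show ?thesis using eq by simp
    next
      case False
      note nz = Fnz[OF p0(1) False]
      have imw: "image_mset (snd \<circ> snd) M = mset w" using mimg(3)[OF p0(1)] p0(2) by simp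
      have N: "card (Zs M w) * mfact M = mfact (mset w)" by (rule Zs_count[OF imw])
      have cond: "fst t \<in> Cc \<or> fst (snd t) \<in> Bc \<or> count M t \<le> 1"
        if t: "t \<in># M" "snd (snd t) \<in> Bc" for t
      proof -
        have "t \<in> set (zip (fst p0) (zip (snd p0) w))" using t(1) p0(2) unfolding \<kappa>_def by simp
        then obtain k where k: "k < length (zip (fst p0) (zip (snd p0) w))" "t = zip (fst p0) (zip (snd p0) w) ! k"
          by (auto simp: in_set_conv_nth)
        have kd: "k < d" using k(1) Pz[OF p0(1)] lw by simp
        have tk: "t = (fst p0!k, snd p0!k, w!k)" using k Pz[OF p0(1)] lw by simp
        have mC: "fst p0!k \<in> ?C" "snd p0!k \<in> ?B"
        proof -
          have "fst p0!k \<in> set (fst p0)" "snd p0!k \<in> set (snd p0)" using Pz(1,2)[OF p0(1)] kd by simp_all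
          then show "fst p0!k \<in> ?C" "snd p0!k \<in> ?B" using Pz(3,4)[OF p0(1)] by blast+
        qed
        have an: "act (fst p0!k) (snd p0!k) (w!k) \<noteq> 0" using nz kd by blast
        have wB1: "w!k \<notin> B1" using t(2) tk dB by auto
        have pq: "(fst p0!k \<in> C1) = (snd p0!k \<in> B1)" using par[OF mC an] wB1 by simp
        show ?thesis
        proof (cases "fst p0!k \<in> C1")
          case True
          have c1: "count M t \<le> count (image_mset fst M) (fst t)" by (rule count_le_image)
          have c2: "image_mset fst M = mset a" using mimg(1)[OF p0(1)] p0(2) nz by simp
          have ft: "fst t \<in> C1" using True tk by simp
          have c3: "count (mset a) (fst t) \<le> 1" by (rule Seq_count_odd[OF a dC ft])
          have "count M t \<le> 1" using c1 c3 unfolding c2 by linarith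
          then show ?thesis by blast
        next
          case False
          then have "snd p0!k \<notin> B1" using pq by simp
          then have ev: "fst p0!k \<in> Ca \<union> Cc" "snd p0!k \<in> Ba \<union> Bc" using mC False by auto
          show ?thesis
          proof (rule ccontr)
            assume "\<not> ?thesis"
            then have "fst p0!k \<in> Ca" "snd p0!k \<in> Ba" using ev tk by auto
            then have "w!k \<in> Ba" using clo an by blast
            then show False using t(2) tk dab by auto
          qed
        qed
      qed
      have fCc: "finite Cc" and fBc: "finite Bc" using fC fB by auto
      have "(\<Prod>b\<in>Bc. fact (count (mset w) b)) dvd
        (\<Prod>x\<in>Cc. fact (count (image_mset fst M) x)) * (\<Prod>v\<in>Bc. fact (count (image_mset (fst \<circ> snd) M) v)) * card (Zs M w)"
        by (rule nat_div[OF fCc fBc imw N]) (use cond in blast)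
      moreover have "(\<Prod>x\<in>Cc. fact (count (image_mset fst M) x)) = fa"
        unfolding fa_def fact_c_def using mimg(1)[OF p0(1)] p0(2) nz by simp
      moreover have "(\<Prod>v\<in>Bc. fact (count (image_mset (fst \<circ> snd) M) v)) = fb"
        unfolding fb_def fact_c_def using mimg(2)[OF p0(1)] p0(2) nz by simp
      ultimately have "fact_c Bc w dvd fa * fb * card (Zs M w)" unfolding fact_c_def by simp
      then obtain q where "fa * fb * card (Zs M w) = fact_c Bc w * q" by (auto simp: dvd_def)
      then have e2: "of_nat (fa * fb * card (Zs M w)) * F p0 = of_nat (fact_c Bc w) * (of_nat q * F p0)"
        by (simp add: mult_ac)
      show ?thesis unfolding eq e2 by (rule dvd_triv_left)
    qed
  qed
  have "(\<Sum>p\<in>P. of_nat (fa * fb) * F p) = (\<Sum>M\<in>\<kappa> ` P. \<Sum>p\<in>{p. p \<in> P \<and> \<kappa> p = M}. of_nat (fa * fb) * F p)"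
    by (rule sum.image_gen[OF fP])
  also have "of_nat (fact_c Bc w) dvd \<dots>" by (rule dvd_sum) (rule fib)
  finally show ?thesis unfolding sum_eq .
qed



lemma swap4:
  "(\<Sum>as\<in>A. \<Sum>vs\<in>B. \<Sum>a\<in>X. \<Sum>b\<in>Y. g as vs a b) = (\<Sum>a\<in>X. \<Sum>b\<in>Y. \<Sum>as\<in>A. \<Sum>vs\<in>B. (g as vs a b :: 'r::comm_ring_1))"
proof -
  have "(\<Sum>as\<in>A. \<Sum>vs\<in>B. \<Sum>a\<in>X. \<Sum>b\<in>Y. g as vs a b) = (\<Sum>as\<in>A. \<Sum>a\<in>X. \<Sum>vs\<in>B. \<Sum>b\<in>Y. g as vs a b)"
    by (rule sum.cong[OF refl], rule sum.swap)
  also have "\<dots> = (\<Sum>as\<in>A. \<Sum>a\<in>X. \<Sum>b\<in>Y. \<Sum>vs\<in>B. g as vs a b)"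
    by (rule sum.cong[OF refl], rule sum.cong[OF refl], rule sum.swap)
  also have "\<dots> = (\<Sum>a\<in>X. \<Sum>as\<in>A. \<Sum>b\<in>Y. \<Sum>vs\<in>B. g as vs a b)"
    by (rule sum.swap)
  also have "\<dots> = (\<Sum>a\<in>X. \<Sum>b\<in>Y. \<Sum>as\<in>A. \<Sum>vs\<in>B. g as vs a b)"
    by (rule sum.cong[OF refl], rule sum.swap)
  finally show ?thesis .
qed

theorem lemma3p16:
  fixes Ca Cc C1 :: "'c::linorder set"
    and Ba Bc B1 :: "'b::linorder set"
    and mul :: "'c \<Rightarrow> 'c \<Rightarrow> 'c \<Rightarrow> 'r::{idom, ring_char_0}"
    and one :: "'c \<Rightarrow> 'r"
    and act :: "'c \<Rightarrow> 'b \<Rightarrow> 'b \<Rightarrow> 'r"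
    and d :: nat
    and eta :: "'c list \<Rightarrow> 'r" and y :: "'b list \<Rightarrow> 'r"
  assumes "pid_ring TYPE('r)"
    and "calibrated_superalgebra Ca Cc C1 mul one"
    and "calibrated_supermodule Ca Cc C1 mul one Ba Bc B1 act"
    and "eta \<in> Gamma_tilde Ca Cc C1 d"
    and "y \<in> Gamma_tilde Ba Bc B1 d"
  shows "tensor_act Ca Cc C1 Ba Bc B1 act d eta y \<in> Gamma_tilde Ba Bc B1 d"
proof -
  let ?C = "Ca \<union> Cc \<union> C1" and ?B = "Ba \<union> Bc \<union> B1"
  let ?T = "tensor_act Ca Cc C1 Ba Bc B1 act d eta y"
  note A0 = assms(2)[unfolded calibrated_superalgebra_def Let_def]
  have A: "finite ?C" "Ca \<inter> Cc = {}" "Ca \<inter> C1 = {}" "Cc \<inter> C1 = {}"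
    using A0[THEN conjunct1] A0[THEN conjunct2, THEN conjunct1]
      A0[THEN conjunct2, THEN conjunct2, THEN conjunct1]
      A0[THEN conjunct2, THEN conjunct2, THEN conjunct2, THEN conjunct1] by simp_all
  have Mf: "finite ?B" "Ba \<inter> Bc = {}" "Ba \<inter> B1 = {}" "Bc \<inter> B1 = {}"
    using assms(3) unfolding calibrated_supermodule_def Let_def by blast+
  have par: "(u \<in> B1) = ((x \<in> C1) \<noteq> (v \<in> B1))"
    if "x \<in> ?C" "v \<in> ?B" "act x v u \<noteq> 0" for x v u
  proof -
    have "\<forall>x\<in>?C. \<forall>v\<in>?B. \<forall>w. act x v w \<noteq> 0 \<longrightarrow> ((w \<in> B1) \<longleftrightarrow> ((x \<in> C1) \<noteq> (v \<in> B1)))"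
      using assms(3) unfolding calibrated_supermodule_def Let_def by blast
    then show ?thesis using that by blast
  qed
  have clo: "u \<in> Ba" if "x \<in> Ca" "v \<in> Ba" "act x v u \<noteq> 0" for x v u
  proof -
    have "\<forall>x\<in>Ca. \<forall>v\<in>Ba. \<forall>w. act x v w \<noteq> 0 \<longrightarrow> w \<in> Ba"
      using assms(3) unfolding calibrated_supermodule_def Let_def by blast
    then show ?thesis using that by blast
  qed
  have dC: "C1 \<inter> (Ca \<union> Cc) = {}" using A by blast
  have dB: "B1 \<inter> (Ba \<union> Bc) = {}" using Mf by blast
  have SSe: "SSprop C1 eta" by (rule Gamma_tilde_SS[OF assms(4) dC])
  have SSy: "SSprop B1 y" by (rule Gamma_tilde_SS[OF assms(5) dB])
  obtain ca where eta: "eta = (\<lambda>w. \<Sum>bs\<in>Seq Ca Cc C1 d. ca bs * y_vec Cc C1 bs w)"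
    using assms(4) by (auto simp: Gamma_tilde_def)
  obtain cb where y: "y = (\<lambda>w. \<Sum>bs\<in>Seq Ba Bc B1 d. cb bs * y_vec Bc B1 bs w)"
    using assms(5) by (auto simp: Gamma_tilde_def)
  show ?thesis
  proof (rule Gamma_tilde_char[OF Mf(1) dB])
    show "?T w = 0" if "w \<notin> tuples ?B d" for w
      using that by (simp add: tensor_act_def)
    show "SSprop B1 ?T" by (rule tensor_SS[OF par SSe SSy])
    show "of_nat (fact_c Bc w) dvd ?T w" if w: "w \<in> Seq Ba Bc B1 d" "sorted w" for w
    proof -
      have wt: "w \<in> tuples ?B d" using w(1) by (simp add: Seq_def)
      define X where "X as vs = (-1) ^ cross_odd C1 B1 as vs * (\<Prod>k<d. act (as!k) (vs!k) (w!k))" for as vs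
      have "?T w = (\<Sum>as\<in>tuples ?C d. \<Sum>vs\<in>tuples ?B d. eta as * y vs * X as vs)"
        using wt by (simp add: tensor_act_def X_def mult.assoc)
      also have "\<dots> = (\<Sum>as\<in>tuples ?C d. \<Sum>vs\<in>tuples ?B d. \<Sum>a\<in>Seq Ca Cc C1 d. \<Sum>b\<in>Seq Ba Bc B1 d.
          ca a * cb b * (y_vec Cc C1 a as * y_vec Bc B1 b vs * X as vs))"
      proof (intro sum.cong refl)
        fix as vs
        have "eta as * y vs * X as vs = (\<Sum>a\<in>Seq Ca Cc C1 d. \<Sum>b\<in>Seq Ba Bc B1 d.
            (ca a * y_vec Cc C1 a as) * (cb b * y_vec Bc B1 b vs) * X as vs)"
          unfolding eta y by (simp only: sum_distrib_right sum_distrib_left) (rule sum.swap)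
        also have "\<dots> = (\<Sum>a\<in>Seq Ca Cc C1 d. \<Sum>b\<in>Seq Ba Bc B1 d.
            ca a * cb b * (y_vec Cc C1 a as * y_vec Bc B1 b vs * X as vs))"
          by (intro sum.cong refl) (simp add: mult_ac)
        finally show "eta as * y vs * X as vs = (\<Sum>a\<in>Seq Ca Cc C1 d. \<Sum>b\<in>Seq Ba Bc B1 d.
            ca a * cb b * (y_vec Cc C1 a as * y_vec Bc B1 b vs * X as vs))" .
      qed
      also have "\<dots> = (\<Sum>a\<in>Seq Ca Cc C1 d. \<Sum>b\<in>Seq Ba Bc B1 d. \<Sum>as\<in>tuples ?C d. \<Sum>vs\<in>tuples ?B d.
          ca a * cb b * (y_vec Cc C1 a as * y_vec Bc B1 b vs * X as vs))"
        by (rule swap4)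
      also have "\<dots> = (\<Sum>a\<in>Seq Ca Cc C1 d. \<Sum>b\<in>Seq Ba Bc B1 d. ca a * cb b *
          (\<Sum>as\<in>tuples ?C d. \<Sum>vs\<in>tuples ?B d. y_vec Cc C1 a as * y_vec Bc B1 b vs * X as vs))"
        by (simp add: sum_distrib_left)
      finally have Tw: "?T w = \<dots>" .
      have "of_nat (fact_c Bc w) dvd (\<Sum>a\<in>Seq Ca Cc C1 d. \<Sum>b\<in>Seq Ba Bc B1 d. ca a * cb b *
          (\<Sum>as\<in>tuples ?C d. \<Sum>vs\<in>tuples ?B d. y_vec Cc C1 a as * y_vec Bc B1 b vs * X as vs))"
      proof (rule dvd_sum, rule dvd_sum)
        fix a b assume a: "a \<in> Seq Ca Cc C1 d" and b: "b \<in> Seq Ba Bc B1 d"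
        have "of_nat (fact_c Bc w) dvd (\<Sum>as\<in>tuples ?C d. \<Sum>vs\<in>tuples ?B d. y_vec Cc C1 a as * y_vec Bc B1 b vs * X as vs)"
          using basis_D[OF A(1) Mf(1) dC dB Mf(2) par clo a b w(1)] unfolding X_def by (simp add: mult.assoc)
        then show "of_nat (fact_c Bc w) dvd ca a * cb b *
          (\<Sum>as\<in>tuples ?C d. \<Sum>vs\<in>tuples ?B d. y_vec Cc C1 a as * y_vec Bc B1 b vs * X as vs)"
          by (rule dvd_mult)
      qed
      then show ?thesis unfolding Tw .
    qed
  qed
qed


end
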